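(* Let $H$ be a function with domain $\omega$ such that each $H(n)$ is a finite set with at least two elements. If $\mathcal U\in V$ is a P-point ultrafilter on $\omega$, then $\Vdash_{PT_H}$ "$\mathcal U$ generates an ultrafilter", i.e. in the extension, for every $x\subseteq\omega$ there is $u\in\mathcal U$ with $u\subseteq x$ or $u\subseteq\omega\setminus x$.
   Context: An ultrafilter $\mathcal U$ on $\omega$ is a P-point if for every sequence $\langle A_n:n<\omega\rangle$ of members of $\mathcal U$ there is $A\in\mathcal U$ with $A\setminus A_n$ finite for all $n$. $PT_H$ is the set of all $p$ such that (A) $p$ is a nonempty set of finite sequences closed under initial segments; (B) $\eta(l)\in H(l)$ for $\eta\in p$, $l<|\eta|$; (C) for $\eta\in p$, $\mathrm{succ}_p(\eta)=\{i:\eta^\frown i\in p\}$ is a singleton or equals $H(|\eta|)$; (D) every $\eta\in p$ has an extension $\nu\in p$ with $\mathrm{succ}_p(\nu)=H(|\nu|)$. $q$ is stronger than $p$ iff $q\subseteq p$. *)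

theory Defs
  imports Main
begin

definition ultrafilter_on_nat :: "nat set set \<Rightarrow> bool" where
  "ultrafilter_on_nat U \<longleftrightarrow>
     UNIV \<in> U \<and> {} \<notin> U \<and>
     (\<forall>A\<in>U. \<forall>B\<in>U. A \<inter> B \<in> U) \<and>
     (\<forall>A B. A \<in> U \<and> A \<subseteq> B \<longrightarrow> B \<in> U) \<and>
     (\<forall>A. A \<in> U \<or> - A \<in> U)"

definition p_point :: "nat set set \<Rightarrow> bool" where
  "p_point U \<longleftrightarrow> ultrafilter_on_nat U \<and>
     (\<forall>As :: nat \<Rightarrow> nat set. (\<forall>n. As n \<in> U) \<longrightarrow>
        (\<exists>A\<in>U. \<forall>n. finite (A - As n)))"

definition succ_of :: "'a list set \<Rightarrow> 'a list \<Rightarrow> 'a set" where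
  "succ_of p \<eta> = {i. \<eta> @ [i] \<in> p}"

definition PT :: "(nat \<Rightarrow> 'a set) \<Rightarrow> 'a list set set" where
  "PT H = {p. p \<noteq> {} \<and>
     (\<forall>\<eta>\<in>p. \<forall>k. take k \<eta> \<in> p) \<and>
     (\<forall>\<eta>\<in>p. \<forall>l<length \<eta>. \<eta> ! l \<in> H l) \<and>
     (\<forall>\<eta>\<in>p. (\<exists>i. succ_of p \<eta> = {i}) \<or> succ_of p \<eta> = H (length \<eta>)) \<and>
     (\<forall>\<eta>\<in>p. \<exists>\<nu>\<in>p. take (length \<eta>) \<nu> = \<eta> \<and> succ_of p \<nu> = H (length \<nu>))}"

text \<open>Names for subsets of omega, represented by their forcing sets:
  X n is the set of conditions forcing n in the named set.  A family X is
  the forcing-set family of some name iff each X n consists of conditions,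
  is open (closed under strengthening) and is closed under density below
  (if X n is dense below p then p is in X n).  Stronger = subset.\<close>

definition dense_below :: "'a list set set \<Rightarrow> 'a list set set \<Rightarrow> 'a list set \<Rightarrow> bool" where
  "dense_below P D p \<longleftrightarrow> (\<forall>q\<in>P. q \<subseteq> p \<longrightarrow> (\<exists>r\<in>D. r \<subseteq> q))"

definition set_name :: "'a list set set \<Rightarrow> (nat \<Rightarrow> 'a list set set) \<Rightarrow> bool" where
  "set_name P X \<longleftrightarrow>
     (\<forall>n. X n \<subseteq> P) \<and>
     (\<forall>n. \<forall>p\<in>X n. \<forall>q\<in>P. q \<subseteq> p \<longrightarrow> q \<in> X n) \<and>
     (\<forall>n. \<forall>p\<in>P. dense_below P (X n) p \<longrightarrow> p \<in> X n)"

definition forces_generates_ultrafilter :: "'a list set set \<Rightarrow> nat set set \<Rightarrow> bool" where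
  "forces_generates_ultrafilter P U \<longleftrightarrow>
     (\<forall>X. set_name P X \<longrightarrow>
        (\<forall>p\<in>P. \<exists>q\<in>P. q \<subseteq> p \<and>
           (\<exists>u\<in>U. (\<forall>n\<in>u. q \<in> X n) \<or>
                   (\<forall>n\<in>u. \<forall>r\<in>P. r \<subseteq> q \<longrightarrow> r \<notin> X n))))"

end

theory Submission
  imports Defs
begin
definition spl :: "(nat \<Rightarrow> 'a set) \<Rightarrow> 'a list set \<Rightarrow> 'a list \<Rightarrow> bool" where
  "spl H p \<eta> \<longleftrightarrow> succ_of p \<eta> = H (length \<eta>)"
definition restr :: "'a list set \<Rightarrow> 'a list \<Rightarrow> 'a list set" where
  "restr p \<eta> = {\<nu> \<in> p. take (length \<nu>) \<eta> = \<nu> \<or> take (length \<eta>) \<nu> = \<eta>}"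
definition pre :: "(nat \<Rightarrow> 'a) \<Rightarrow> nat \<Rightarrow> 'a list" where
  "pre x k = map x [0..<k]"
definition branch :: "'a list set \<Rightarrow> (nat \<Rightarrow> 'a) \<Rightarrow> bool" where
  "branch p x \<longleftrightarrow> (\<forall>k. pre x k \<in> p)"

lemma succ_of_iff[simp]: "i \<in> succ_of p \<eta> \<longleftrightarrow> \<eta> @ [i] \<in> p"
  by (simp add: succ_of_def)

lemma PT_D: "p \<in> PT H \<Longrightarrow> p \<noteq> {} \<and>
     (\<forall>\<eta>\<in>p. \<forall>k. take k \<eta> \<in> p) \<and>
     (\<forall>\<eta>\<in>p. \<forall>l<length \<eta>. \<eta> ! l \<in> H l) \<and>
     (\<forall>\<eta>\<in>p. (\<exists>i. succ_of p \<eta> = {i}) \<or> succ_of p \<eta> = H (length \<eta>)) \<and>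
     (\<forall>\<eta>\<in>p. \<exists>\<nu>\<in>p. take (length \<eta>) \<nu> = \<eta> \<and> succ_of p \<nu> = H (length \<nu>))"
  unfolding PT_def by (rule CollectD)

lemma PT_take: "p \<in> PT H \<Longrightarrow> \<eta> \<in> p \<Longrightarrow> take k \<eta> \<in> p"
  using PT_D[of p H] by blast
lemma PT_nil: "p \<in> PT H \<Longrightarrow> [] \<in> p"
proof -
  assume a: "p \<in> PT H"
  then obtain \<eta> where "\<eta> \<in> p" using PT_D[OF a] by blast
  from PT_take[OF a this, of 0] show ?thesis by simp
qed
lemma PT_nth: "p \<in> PT H \<Longrightarrow> \<eta> \<in> p \<Longrightarrow> l < length \<eta> \<Longrightarrow> \<eta>!l \<in> H l"
  using PT_D[of p H] by blast
lemma PT_succ: "p \<in> PT H \<Longrightarrow> \<eta> \<in> p \<Longrightarrow> (\<exists>i. succ_of p \<eta> = {i}) \<or> succ_of p \<eta> = H (length \<eta>)"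
  using PT_D[of p H] by blast
lemma PT_split: "p \<in> PT H \<Longrightarrow> \<eta> \<in> p \<Longrightarrow> \<exists>\<nu>\<in>p. take (length \<eta>) \<nu> = \<eta> \<and> spl H p \<nu>"
  using PT_D[of p H] unfolding spl_def by blast
lemma PT_ex_succ: "p \<in> PT H \<Longrightarrow> (\<And>n. H n \<noteq> {}) \<Longrightarrow> \<eta> \<in> p \<Longrightarrow> \<exists>i. \<eta>@[i] \<in> p"
proof -
  assume a: "p \<in> PT H" "\<And>n. H n \<noteq> {}" "\<eta> \<in> p"
  have "succ_of p \<eta> \<noteq> {}" using PT_succ[OF a(1,3)] a(2) by auto
  then show ?thesis by auto
qed

lemma PT_I:
  assumes "p \<noteq> {}" "\<And>\<eta> k. \<eta>\<in>p \<Longrightarrow> take k \<eta> \<in> p"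
    "\<And>\<eta> l. \<eta>\<in>p \<Longrightarrow> l<length \<eta> \<Longrightarrow> \<eta> ! l \<in> H l"
    "\<And>\<eta>. \<eta>\<in>p \<Longrightarrow> (\<exists>i. succ_of p \<eta> = {i}) \<or> succ_of p \<eta> = H (length \<eta>)"
    "\<And>\<eta>. \<eta>\<in>p \<Longrightarrow> \<exists>\<nu>\<in>p. take (length \<eta>) \<nu> = \<eta> \<and> spl H p \<nu>"
  shows "p \<in> PT H"
  unfolding PT_def using assms unfolding spl_def by blast

lemma ext_len:
  assumes "\<And>\<eta>. \<eta> \<in> p \<Longrightarrow> \<exists>i. \<eta>@[i] \<in> p" "\<eta> \<in> p" "length \<eta> \<le> n"
  shows "\<exists>\<nu>\<in>p. length \<nu> = n \<and> take (length \<eta>) \<nu> = \<eta>"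
  using assms(3)
proof (induction n)
  case 0 then show ?case using assms(2) by auto
next
  case (Suc n)
  show ?case
  proof (cases "length \<eta> = Suc n")
    case True then show ?thesis using assms(2) by auto
  next
    case False
    then obtain \<nu> where "\<nu> \<in> p" "length \<nu> = n" "take (length \<eta>) \<nu> = \<eta>" using Suc by auto
    moreover obtain i where "\<nu>@[i] \<in> p" using assms(1) calculation(1) by blast
    ultimately show ?thesis using False Suc.prems
      by (intro bexI[of _ "\<nu>@[i]"]) auto
  qed
qed

lemma PT_len: "p \<in> PT H \<Longrightarrow> (\<And>n. H n \<noteq> {}) \<Longrightarrow> \<eta> \<in> p \<Longrightarrow> length \<eta> \<le> n \<Longrightarrow>
   \<exists>\<nu>\<in>p. length \<nu> = n \<and> take (length \<eta>) \<nu> = \<eta>"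
  using ext_len[of p] PT_ex_succ by blast

lemma PT_len0: "p \<in> PT H \<Longrightarrow> (\<And>n. H n \<noteq> {}) \<Longrightarrow> \<exists>\<nu>\<in>p. length \<nu> = n"
  using PT_len[of p H "[]" n] PT_nil by auto

lemma PT_finite_level:
  assumes "p \<in> PT H" "\<And>n. finite (H n)"
  shows "finite {\<nu>\<in>p. length \<nu> \<le> n}"
proof -
  have "{\<nu>\<in>p. length \<nu> \<le> n} \<subseteq> {xs. set xs \<subseteq> (\<Union>l<n. H l) \<and> length xs \<le> n}"
  proof clarify
    fix \<nu> x assume a: "\<nu> \<in> p" "length \<nu> \<le> n" "x \<in> set \<nu>"
    then obtain l where "l < length \<nu>" "\<nu>!l = x" by (auto simp: in_set_conv_nth)
    then show "x \<in> (\<Union>l<n. H l)" using PT_nth[OF assms(1) a(1)] a(2) by force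
  qed
  moreover have "finite {xs. set xs \<subseteq> (\<Union>l<n. H l) \<and> length xs \<le> n}"
    by (rule finite_lists_length_le) (simp add: assms(2))
  ultimately show ?thesis by (rule finite_subset)
qed

lemma take_pre: "k \<le> n \<Longrightarrow> take k (pre x n) = pre x k"
  by (simp add: pre_def take_map)
lemma pre_Suc: "pre x (Suc n) = pre x n @ [x n]"
  by (simp add: pre_def)
lemma len_pre[simp]: "length (pre x n) = n"
  by (simp add: pre_def)
lemma nth_pre[simp]: "i < n \<Longrightarrow> pre x n ! i = x i"
  by (simp add: pre_def)

lemma take_take_len: "take (length (take k \<nu>)) \<eta> = take k \<nu> \<Longrightarrow> True" by simp

lemma comp_le: "take (length \<nu>) \<eta> = \<nu> \<or> take (length \<eta>) \<nu> = \<eta> \<Longrightarrow> length \<nu> \<le> length \<eta> \<Longrightarrow> take (length \<nu>) \<eta> = \<nu>"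
  by (metis min.absorb1 take_all take_take)
lemma comp_ge: "take (length \<nu>) \<eta> = \<nu> \<or> take (length \<eta>) \<nu> = \<eta> \<Longrightarrow> length \<eta> \<le> length \<nu> \<Longrightarrow> take (length \<eta>) \<nu> = \<eta>"
  by (metis min.absorb1 take_all take_take)

lemma take_len_le: "take n \<nu> = \<eta> \<Longrightarrow> length \<eta> \<le> length \<nu>" by auto

lemma restr_sub: "restr p \<eta> \<subseteq> p" by (auto simp: restr_def)
lemma restr_mono: "r \<subseteq> q \<Longrightarrow> restr r \<eta> \<subseteq> restr q \<eta>" by (auto simp: restr_def)
lemma restr_self: "\<eta> \<in> p \<Longrightarrow> \<eta> \<in> restr p \<eta>" by (auto simp: restr_def)

lemma restr_succ_ge:
  assumes "length \<eta> \<le> length \<nu>" "take (length \<eta>) \<nu> = \<eta>"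
  shows "succ_of (restr p \<eta>) \<nu> = succ_of p \<nu>"
  using assms by (auto simp: succ_of_def restr_def)

lemma restr_succ_lt:
  assumes "p \<in> PT H" "\<eta> \<in> p" "length \<nu> < length \<eta>" "take (length \<nu>) \<eta> = \<nu>"
  shows "succ_of (restr p \<eta>) \<nu> = {\<eta> ! length \<nu>}"
proof -
  have e: "take (Suc (length \<nu>)) \<eta> = \<nu> @ [\<eta> ! length \<nu>]"
    using assms(3,4) by (metis take_Suc_conv_app_nth)
  have "take (Suc (length \<nu>)) \<eta> \<in> p" using PT_take[OF assms(1,2)] .
  show ?thesis
  proof (rule set_eqI, rule iffI)
    fix i assume "i \<in> succ_of (restr p \<eta>) \<nu>"
    then have "take (Suc (length \<nu>)) \<eta> = \<nu> @ [i] \<or> take (length \<eta>) (\<nu>@[i]) = \<eta>"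
      by (auto simp: restr_def)
    then show "i \<in> {\<eta> ! length \<nu>}"
    proof
      assume "take (Suc (length \<nu>)) \<eta> = \<nu> @ [i]" then show ?thesis using e by simp
    next
      assume a: "take (length \<eta>) (\<nu>@[i]) = \<eta>"
      then have "length \<eta> = Suc (length \<nu>)" using assms(3)
        by (metis Suc_leI le_antisym length_append_singleton length_take min.cobounded2 min_def)
      then have "\<nu>@[i] = \<nu>@[\<eta> ! length \<nu>]" using a e by simp
      then show ?thesis by simp
    qed
  next
    fix i assume "i \<in> {\<eta> ! length \<nu>}"
    then show "i \<in> succ_of (restr p \<eta>) \<nu>"
      using e \<open>take (Suc (length \<nu>)) \<eta> \<in> p\<close> by (auto simp: restr_def)
  qed
qed

lemma restr_PT:
  assumes "p \<in> PT H" "\<eta> \<in> p"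
  shows "restr p \<eta> \<in> PT H"
proof (rule PT_I)
  show "restr p \<eta> \<noteq> {}" using restr_self[OF assms(2)] by auto
next
  fix \<nu> k assume a: "\<nu> \<in> restr p \<eta>"
  then have n: "\<nu> \<in> p" and c: "take (length \<nu>) \<eta> = \<nu> \<or> take (length \<eta>) \<nu> = \<eta>"
    by (auto simp: restr_def)
  have "take (length (take k \<nu>)) \<eta> = take k \<nu> \<or> take (length \<eta>) (take k \<nu>) = \<eta>"
    using c
  proof
    assume h: "take (length \<nu>) \<eta> = \<nu>"
    have e: "take k \<nu> = take (min k (length \<nu>)) \<eta>" by (subst h[symmetric]) simp
    have l: "length (take k \<nu>) = min k (length \<nu>)" by simp
    show ?thesis by (intro disjI1) (metis l e)
  next
    assume h: "take (length \<eta>) \<nu> = \<eta>"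
    show ?thesis
    proof (cases "k \<le> length \<eta>")
      case True
      have "take k \<eta> = take k \<nu>" by (subst h[symmetric]) (simp add: True min_absorb1)
      moreover have "length \<eta> \<le> length \<nu>" using h by (rule take_len_le)
      ultimately show ?thesis using True by (simp add: min_absorb1)
    next
      case False
      have "take (length \<eta>) (take k \<nu>) = take (length \<eta>) \<nu>" using False by (simp add: min_absorb1)
      then show ?thesis using h by simp
    qed
  qed
  then show "take k \<nu> \<in> restr p \<eta>" using PT_take[OF assms(1) n] by (auto simp: restr_def)
next
  fix \<nu> l assume "\<nu> \<in> restr p \<eta>" "l < length \<nu>"
  then show "\<nu> ! l \<in> H l" using PT_nth[OF assms(1)] restr_sub by blast
next
  fix \<nu> assume a: "\<nu> \<in> restr p \<eta>"
  then have n: "\<nu> \<in> p" and c: "take (length \<nu>) \<eta> = \<nu> \<or> take (length \<eta>) \<nu> = \<eta>"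
    by (auto simp: restr_def)
  show "(\<exists>i. succ_of (restr p \<eta>) \<nu> = {i}) \<or> succ_of (restr p \<eta>) \<nu> = H (length \<nu>)"
  proof (cases "length \<nu> < length \<eta>")
    case True
    then show ?thesis using restr_succ_lt[OF assms True] comp_le[OF c] by auto
  next
    case False
    then show ?thesis using restr_succ_ge[of \<eta> \<nu> p] comp_ge[OF c] PT_succ[OF assms(1) n] by auto
  qed
next
  fix \<nu> assume a: "\<nu> \<in> restr p \<eta>"
  then have n: "\<nu> \<in> p" and c: "take (length \<nu>) \<eta> = \<nu> \<or> take (length \<eta>) \<nu> = \<eta>"
    by (auto simp: restr_def)
  show "\<exists>\<nu>'\<in>restr p \<eta>. take (length \<nu>) \<nu>' = \<nu> \<and> spl H (restr p \<eta>) \<nu>'"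
  proof (cases "length \<nu> \<le> length \<eta>")
    case True
    obtain \<nu>' where v: "\<nu>' \<in> p" "take (length \<eta>) \<nu>' = \<eta>" "spl H p \<nu>'"
      using PT_split[OF assms] by blast
    have l: "length \<eta> \<le> length \<nu>'" using v(2) by (rule take_len_le)
    have "\<nu>' \<in> restr p \<eta>" using v by (auto simp: restr_def)
    moreover have "take (length \<nu>) \<nu>' = \<nu>"
    proof -
      have "take (length \<nu>) \<nu>' = take (length \<nu>) (take (length \<eta>) \<nu>')" using True by (simp add: min_absorb1)
      then show ?thesis using v(2) comp_le[OF c True] by simp
    qed
    moreover have "spl H (restr p \<eta>) \<nu>'" using v(3) restr_succ_ge[OF l v(2)] by (simp add: spl_def)
    ultimately show ?thesis by blast
  next
    case False
    have c2: "take (length \<eta>) \<nu> = \<eta>" using comp_ge[OF c] False by simp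
    obtain \<nu>' where v: "\<nu>' \<in> p" "take (length \<nu>) \<nu>' = \<nu>" "spl H p \<nu>'"
      using PT_split[OF assms(1) n] by blast
    have l: "length \<nu> \<le> length \<nu>'" using v(2) by (rule take_len_le)
    have v2: "take (length \<eta>) \<nu>' = \<eta>"
    proof -
      have "take (length \<eta>) \<nu>' = take (length \<eta>) (take (length \<nu>) \<nu>')" using False by (simp add: min_absorb1)
      then show ?thesis using v(2) c2 by simp
    qed
    have l2: "length \<eta> \<le> length \<nu>'" using l False by simp
    have "\<nu>' \<in> restr p \<eta>" using v v2 by (auto simp: restr_def)
    moreover have "spl H (restr p \<eta>) \<nu>'" using v(3) restr_succ_ge[OF l2 v2] by (simp add: spl_def)
    ultimately show ?thesis using v(2) by blast
  qed
qed

lemma finite_bound: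
  assumes "finite S" "\<forall>x\<in>S. \<exists>n::nat. P x n"
  shows "\<exists>b. \<forall>x\<in>S. \<exists>n<b. P x n"
  using assms
proof (induction S rule: finite_induct)
  case empty then show ?case by auto
next
  case (insert a F)
  have "\<forall>x\<in>F. \<exists>n. P x n" using insert.prems by blast
  then obtain b where b: "\<forall>x\<in>F. \<exists>n<b. P x n" using insert.IH by blast
  obtain n where n: "P a n" using insert.prems by blast
  have "\<forall>x\<in>insert a F. \<exists>k<max b (Suc n). P x k"
  proof
    fix x assume "x \<in> insert a F"
    then show "\<exists>k<max b (Suc n). P x k"
    proof
      assume "x = a" then show ?thesis using n by (intro exI[of _ n]) simp
    next
      assume "x \<in> F" then obtain k where "k < b" "P x k" using b by blast
      then show ?thesis by (intro exI[of _ k]) simp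
    qed
  qed
  then show ?case by blast
qed

definition glue :: "'a list set \<Rightarrow> nat \<Rightarrow> ('a list \<Rightarrow> 'a list set) \<Rightarrow> 'a list set" where
  "glue q L R = {\<nu> \<in> q. length \<nu> \<le> L} \<union> (\<Union>\<eta>\<in>{\<eta>\<in>q. length \<eta> = L}. R \<eta>)"

locale glue_loc =
  fixes H :: "nat \<Rightarrow> 'a set" and q L R
  assumes Hne: "\<And>n. H n \<noteq> {}"
    and qPT: "q \<in> PT H"
    and RPT: "\<And>\<eta>. \<eta> \<in> q \<Longrightarrow> length \<eta> = L \<Longrightarrow> R \<eta> \<in> PT H"
    and Rsub: "\<And>\<eta>. \<eta> \<in> q \<Longrightarrow> length \<eta> = L \<Longrightarrow> R \<eta> \<subseteq> restr q \<eta>"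
begin

lemma g1: assumes "\<eta> \<in> q" "length \<eta> = L" shows "\<eta> \<in> R \<eta>"
proof -
  obtain \<nu> where v: "\<nu> \<in> R \<eta>" "length \<nu> = L" using PT_len0[OF RPT[OF assms] Hne] by blast
  then have "\<nu> \<in> restr q \<eta>" using Rsub[OF assms] by blast
  then have "take (length \<nu>) \<eta> = \<nu> \<or> take (length \<eta>) \<nu> = \<eta>" by (simp add: restr_def)
  then have "\<nu> = \<eta>" using v(2) assms(2) by auto
  then show ?thesis using v by simp
qed

lemma glue_sub: "glue q L R \<subseteq> q"
  unfolding glue_def using Rsub restr_sub by blast

lemma g_in_R:
  assumes "\<nu> \<in> glue q L R" "L \<le> length \<nu>"
  shows "take L \<nu> \<in> q \<and> length (take L \<nu>) = L \<and> \<nu> \<in> R (take L \<nu>)"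
  using assms(1) unfolding glue_def
proof
  assume "\<nu> \<in> {\<nu> \<in> q. length \<nu> \<le> L}"
  then have "\<nu> \<in> q" "length \<nu> = L" using assms(2) by auto
  then show ?thesis using g1 by simp
next
  assume "\<nu> \<in> (\<Union>\<eta>\<in>{\<eta>\<in>q. length \<eta> = L}. R \<eta>)"
  then obtain \<eta> where e: "\<eta> \<in> q" "length \<eta> = L" "\<nu> \<in> R \<eta>" by blast
  then have "\<nu> \<in> restr q \<eta>" using Rsub by blast
  then have "take (length \<nu>) \<eta> = \<nu> \<or> take (length \<eta>) \<nu> = \<eta>" by (simp add: restr_def)
  then have "take L \<nu> = \<eta>" using comp_ge e(2) assms(2) by blast
  then show ?thesis using e by simp
qed

lemma g_mem:
  assumes "L \<le> length \<nu>" "take L \<nu> \<in> q" "\<nu> \<in> R (take L \<nu>)"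
  shows "\<nu> \<in> glue q L R"
  unfolding glue_def using assms by (intro UnI2) (auto intro!: bexI[of _ "take L \<nu>"])

lemma glue_low: "length \<nu> \<le> L \<Longrightarrow> \<nu> \<in> glue q L R \<longleftrightarrow> \<nu> \<in> q"
  using glue_sub unfolding glue_def by blast

lemma glue_succ_lt: "length \<nu> < L \<Longrightarrow> succ_of (glue q L R) \<nu> = succ_of q \<nu>"
  using glue_low by (auto simp: succ_of_def)

lemma glue_succ_ge:
  assumes "L \<le> length \<nu>" "\<nu> \<in> glue q L R"
  shows "succ_of (glue q L R) \<nu> = succ_of (R (take L \<nu>)) \<nu>"
proof (rule set_eqI)
  fix i
  have t: "take L (\<nu>@[i]) = take L \<nu>" using assms(1) by simp
  have tq: "take L \<nu> \<in> q" using g_in_R[OF assms(2,1)] by blast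
  show "i \<in> succ_of (glue q L R) \<nu> \<longleftrightarrow> i \<in> succ_of (R (take L \<nu>)) \<nu>"
  proof
    assume "i \<in> succ_of (glue q L R) \<nu>"
    then have "\<nu>@[i] \<in> glue q L R" by simp
    then show "i \<in> succ_of (R (take L \<nu>)) \<nu>" using g_in_R[of "\<nu>@[i]"] assms(1) t by simp
  next
    assume "i \<in> succ_of (R (take L \<nu>)) \<nu>"
    then show "i \<in> succ_of (glue q L R) \<nu>" using g_mem[of "\<nu>@[i]"] assms(1) t tq by simp
  qed
qed

lemma glue_PT: "glue q L R \<in> PT H"
proof (rule PT_I)
  show "glue q L R \<noteq> {}" using glue_low[of "[]"] PT_nil[OF qPT] by auto
next
  fix \<nu> k assume a: "\<nu> \<in> glue q L R"
  show "take k \<nu> \<in> glue q L R"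
  proof (cases "length (take k \<nu>) \<le> L")
    case True
    then show ?thesis using glue_low a glue_sub PT_take[OF qPT] by blast
  next
    case False
    then have L: "L \<le> length \<nu>" "L \<le> k" by (auto simp: min_def split: if_splits)
    have r: "take L \<nu> \<in> q" "length (take L \<nu>) = L" "\<nu> \<in> R (take L \<nu>)" using g_in_R[OF a L(1)] by auto
    have "take k \<nu> \<in> R (take L \<nu>)" using PT_take[OF RPT[OF r(1,2)] r(3)] .
    moreover have "take L (take k \<nu>) = take L \<nu>" using L(2) by (simp add: min_absorb1)
    moreover have "L \<le> length (take k \<nu>)" using L by simp
    ultimately show ?thesis using g_mem[of "take k \<nu>"] r(1) by simp
  qed
next
  fix \<nu> l assume "\<nu> \<in> glue q L R" "l < length \<nu>"
  then show "\<nu> ! l \<in> H l" using PT_nth[OF qPT] glue_sub by blast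
next
  fix \<nu> assume a: "\<nu> \<in> glue q L R"
  show "(\<exists>i. succ_of (glue q L R) \<nu> = {i}) \<or> succ_of (glue q L R) \<nu> = H (length \<nu>)"
  proof (cases "length \<nu> < L")
    case True
    then show ?thesis using glue_succ_lt PT_succ[OF qPT] a glue_sub by auto
  next
    case False
    then have L: "L \<le> length \<nu>" by simp
    have r: "take L \<nu> \<in> q" "length (take L \<nu>) = L" "\<nu> \<in> R (take L \<nu>)" using g_in_R[OF a L] by auto
    show ?thesis using glue_succ_ge[OF L a] PT_succ[OF RPT[OF r(1,2)] r(3)] by simp
  qed
next
  have ge: "\<exists>\<nu>'\<in>glue q L R. take (length \<nu>) \<nu>' = \<nu> \<and> spl H (glue q L R) \<nu>'"
    if a: "\<nu> \<in> glue q L R" and L: "L \<le> length \<nu>" for \<nu>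
  proof -
    have r: "take L \<nu> \<in> q" "length (take L \<nu>) = L" "\<nu> \<in> R (take L \<nu>)" using g_in_R[OF a L] by auto
    obtain \<nu>' where v: "\<nu>' \<in> R (take L \<nu>)" "take (length \<nu>) \<nu>' = \<nu>" "spl H (R (take L \<nu>)) \<nu>'"
      using PT_split[OF RPT[OF r(1,2)] r(3)] by blast
    have l: "length \<nu> \<le> length \<nu>'" using v(2) by (rule take_len_le)
    have tt: "take L \<nu>' = take L \<nu>"
    proof -
      have "take L \<nu>' = take L (take (length \<nu>) \<nu>')" using L by (simp add: min_absorb1)
      then show ?thesis using v(2) by simp
    qed
    have m: "\<nu>' \<in> glue q L R" using g_mem[of \<nu>'] tt v(1) r(1) l L by simp
    have "spl H (glue q L R) \<nu>'" using glue_succ_ge[of \<nu>'] m l L tt v(3) by (simp add: spl_def)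
    then show ?thesis using m v(2) by blast
  qed
  fix \<nu> assume a: "\<nu> \<in> glue q L R"
  show "\<exists>\<nu>'\<in>glue q L R. take (length \<nu>) \<nu>' = \<nu> \<and> spl H (glue q L R) \<nu>'"
  proof (cases "L \<le> length \<nu>")
    case True then show ?thesis using ge a by blast
  next
    case False
    have "\<nu> \<in> q" using a glue_sub by blast
    then obtain \<eta> where e: "\<eta> \<in> q" "length \<eta> = L" "take (length \<nu>) \<eta> = \<nu>"
      using PT_len[OF qPT Hne, of \<nu> L] False by auto
    have eg: "\<eta> \<in> glue q L R" using glue_low e by simp
    obtain \<nu>' where v: "\<nu>' \<in> glue q L R" "take (length \<eta>) \<nu>' = \<eta>" "spl H (glue q L R) \<nu>'"
      using ge[OF eg] e(2) by auto
    have "take (length \<nu>) \<nu>' = \<nu>"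
    proof -
      have "take (length \<nu>) \<nu>' = take (length \<nu>) (take (length \<eta>) \<nu>')" using False e(2) by (simp add: min_absorb1)
      then show ?thesis using v(2) e(3) by simp
    qed
    then show ?thesis using v by blast
  qed
qed

lemma glue_restr:
  assumes "\<eta> \<in> q" "length \<eta> = L"
  shows "restr (glue q L R) \<eta> \<subseteq> R \<eta>"
proof
  fix \<nu> assume "\<nu> \<in> restr (glue q L R) \<eta>"
  then have n: "\<nu> \<in> glue q L R" and c: "take (length \<nu>) \<eta> = \<nu> \<or> take (length \<eta>) \<nu> = \<eta>"
    by (auto simp: restr_def)
  show "\<nu> \<in> R \<eta>"
  proof (cases "L \<le> length \<nu>")
    case True
    then show ?thesis using g_in_R[OF n True] comp_ge[OF c] assms(2) by auto
  next
    case False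
    then have "\<nu> = take (length \<nu>) \<eta>" using comp_le[OF c] assms(2) by simp
    then show ?thesis using PT_take[OF RPT[OF assms] g1[OF assms]] by metis
  qed
qed

end

lemma restr_take:
  assumes "k \<le> length \<eta>"
  shows "restr q \<eta> \<subseteq> restr q (take k \<eta>)"
proof
  fix \<nu> assume "\<nu> \<in> restr q \<eta>"
  then have n: "\<nu> \<in> q" and c: "take (length \<nu>) \<eta> = \<nu> \<or> take (length \<eta>) \<nu> = \<eta>"
    by (auto simp: restr_def)
  have "take (length \<nu>) (take k \<eta>) = \<nu> \<or> take k \<nu> = take k \<eta>"
    using c
  proof
    assume h: "take (length \<nu>) \<eta> = \<nu>"
    show ?thesis
    proof (cases "length \<nu> \<le> k")
      case True
      then have "take (length \<nu>) (take k \<eta>) = take (length \<nu>) \<eta>" by (simp add: min_absorb1)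
      then show ?thesis using h by simp
    next
      case False
      then have "take k \<nu> = take k (take (length \<nu>) \<eta>)" using h by simp
      also have "\<dots> = take k \<eta>" using False by (simp add: min_absorb1)
      finally show ?thesis by simp
    qed
  next
    assume h: "take (length \<eta>) \<nu> = \<eta>"
    have "take k \<nu> = take k (take (length \<eta>) \<nu>)" using assms by (simp add: min_absorb1)
    then show ?thesis using h by simp
  qed
  then show "\<nu> \<in> restr q (take k \<eta>)" using n assms by (auto simp: restr_def min_absorb1)
qed

locale fus =
  fixes H :: "nat \<Rightarrow> 'a set" and X :: "nat \<Rightarrow> 'a list set set" and p :: "'a list set"
  assumes Hfin: "\<And>n. finite (H n)" and Hne: "\<And>n. H n \<noteq> {}"
    and nm: "set_name (PT H) X" and pPT: "p \<in> PT H"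
begin

definition decides :: "'a list set \<Rightarrow> nat \<Rightarrow> bool" where
  "decides r m \<longleftrightarrow> r \<in> X m \<or> (\<forall>r'\<in>PT H. r' \<subseteq> r \<longrightarrow> r' \<notin> X m)"

lemma X_PT: "r \<in> X m \<Longrightarrow> r \<in> PT H" using nm unfolding set_name_def by blast
lemma X_open: "r \<in> X m \<Longrightarrow> r' \<in> PT H \<Longrightarrow> r' \<subseteq> r \<Longrightarrow> r' \<in> X m"
  using nm unfolding set_name_def by blast
lemma X_dense: "r \<in> PT H \<Longrightarrow> dense_below (PT H) (X m) r \<Longrightarrow> r \<in> X m"
  using nm unfolding set_name_def by blast

lemma dec_ex: "r \<in> PT H \<Longrightarrow> \<exists>r'. r' \<in> PT H \<and> r' \<subseteq> r \<and> decides r' m"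
proof -
  assume r: "r \<in> PT H"
  show ?thesis
  proof (cases "r \<in> X m")
    case True then show ?thesis using r by (auto simp: decides_def)
  next
    case False
    then have "\<not> dense_below (PT H) (X m) r" using X_dense r by blast
    then obtain q where q: "q \<in> PT H" "q \<subseteq> r" "\<forall>r2\<in>X m. \<not> r2 \<subseteq> q"
      unfolding dense_below_def by blast
    have "decides q m" unfolding decides_def using q(3) by blast
    then show ?thesis using q by blast
  qed
qed

lemma dec_mono: "decides r m \<Longrightarrow> r' \<in> PT H \<Longrightarrow> r' \<subseteq> r \<Longrightarrow> decides r' m"
  unfolding decides_def using X_open by blast

definition dc :: "nat \<Rightarrow> 'a list set \<Rightarrow> 'a list set" where
  "dc m r = (SOME r'. r' \<in> PT H \<and> r' \<subseteq> r \<and> decides r' m)"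

lemma dc_prop: "r \<in> PT H \<Longrightarrow> dc m r \<in> PT H \<and> dc m r \<subseteq> r \<and> decides (dc m r) m"
  unfolding dc_def using dec_ex by (rule someI_ex) 

definition nextL :: "'a list set \<Rightarrow> nat \<Rightarrow> nat" where
  "nextL q' L = (SOME L'. L < L' \<and> (\<forall>\<nu>\<in>q'. length \<nu> \<le> L \<longrightarrow>
      (\<exists>\<nu>'\<in>q'. take (length \<nu>) \<nu>' = \<nu> \<and> length \<nu>' < L' \<and> spl H q' \<nu>')))"

lemma nextL_prop:
  assumes "q' \<in> PT H"
  shows "L < nextL q' L \<and> (\<forall>\<nu>\<in>q'. length \<nu> \<le> L \<longrightarrow>
      (\<exists>\<nu>'\<in>q'. take (length \<nu>) \<nu>' = \<nu> \<and> length \<nu>' < nextL q' L \<and> spl H q' \<nu>'))"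
proof -
  have "\<forall>\<nu>\<in>{\<nu>\<in>q'. length \<nu> \<le> L}. \<exists>n. \<exists>\<nu>'\<in>q'. take (length \<nu>) \<nu>' = \<nu> \<and> length \<nu>' = n \<and> spl H q' \<nu>'"
  proof
    fix \<nu> assume "\<nu> \<in> {\<nu>\<in>q'. length \<nu> \<le> L}"
    then have "\<nu> \<in> q'" by simp
    then obtain \<nu>' where "\<nu>'\<in>q'" "take (length \<nu>) \<nu>' = \<nu>" "spl H q' \<nu>'"
      using PT_split[OF assms] by blast
    then show "\<exists>n. \<exists>\<nu>'\<in>q'. take (length \<nu>) \<nu>' = \<nu> \<and> length \<nu>' = n \<and> spl H q' \<nu>'"
      by (intro exI[of _ "length \<nu>'"] bexI[of _ \<nu>']) simp_all
  qed
  from finite_bound[OF PT_finite_level[OF assms Hfin, of L] this]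
  obtain b where b: "\<forall>\<nu>\<in>{\<nu>\<in>q'. length \<nu> \<le> L}. \<exists>n<b. \<exists>\<nu>'\<in>q'. take (length \<nu>) \<nu>' = \<nu> \<and> length \<nu>' = n \<and> spl H q' \<nu>'"
    by blast
  have "L < max b (Suc L) \<and> (\<forall>\<nu>\<in>q'. length \<nu> \<le> L \<longrightarrow>
      (\<exists>\<nu>'\<in>q'. take (length \<nu>) \<nu>' = \<nu> \<and> length \<nu>' < max b (Suc L) \<and> spl H q' \<nu>'))"
  proof (intro conjI ballI impI)
    fix \<nu> assume "\<nu> \<in> q'" "length \<nu> \<le> L"
    then obtain n \<nu>' where "n < b" "\<nu>'\<in>q'" "take (length \<nu>) \<nu>' = \<nu>" "length \<nu>' = n" "spl H q' \<nu>'"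
      using b by blast
    then show "\<exists>\<nu>'\<in>q'. take (length \<nu>) \<nu>' = \<nu> \<and> length \<nu>' < max b (Suc L) \<and> spl H q' \<nu>'"
      by (intro bexI[of _ \<nu>']) auto
  qed simp
  then show ?thesis unfolding nextL_def by (rule someI)
qed

primrec sq :: "nat \<Rightarrow> 'a list set \<times> nat" where
  "sq 0 = (p, 0)"
| "sq (Suc m) = (let q' = glue (fst (sq m)) (snd (sq m)) (\<lambda>\<eta>. dc m (restr (fst (sq m)) \<eta>))
     in (q', nextL q' (snd (sq m))))"

abbreviation "Q m \<equiv> fst (sq m)"
abbreviation "Lv m \<equiv> snd (sq m)"

lemma Q_Suc: "Q (Suc m) = glue (Q m) (Lv m) (\<lambda>\<eta>. dc m (restr (Q m) \<eta>))"
  by (simp add: Let_def sq.simps(2))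
lemma Lv_Suc: "Lv (Suc m) = nextL (Q (Suc m)) (Lv m)"
  by (simp add: Let_def sq.simps(2))

declare sq.simps(2)[simp del]

lemma QPT_gl: "Q m \<in> PT H \<and> glue_loc H (Q m) (Lv m) (\<lambda>\<eta>. dc m (restr (Q m) \<eta>))"
proof (induction m)
  case 0
  have "glue_loc H p 0 (\<lambda>\<eta>. dc 0 (restr p \<eta>))"
    by unfold_locales (use Hne pPT dc_prop restr_PT in blast)+
  then show ?case using pPT by simp
next
  case (Suc m)
  then interpret g: glue_loc H "Q m" "Lv m" "\<lambda>\<eta>. dc m (restr (Q m) \<eta>)" by blast
  have qp: "Q (Suc m) \<in> PT H" using g.glue_PT Q_Suc by simp
  have "glue_loc H (Q (Suc m)) (Lv (Suc m)) (\<lambda>\<eta>. dc (Suc m) (restr (Q (Suc m)) \<eta>))"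
    by unfold_locales (use Hne qp dc_prop restr_PT in blast)+
  then show ?case using qp by blast
qed

lemma QPT: "Q m \<in> PT H" using QPT_gl by blast

lemma Q_anti1: "Q (Suc m) \<subseteq> Q m"
proof -
  interpret g: glue_loc H "Q m" "Lv m" "\<lambda>\<eta>. dc m (restr (Q m) \<eta>)" using QPT_gl by blast
  show ?thesis using g.glue_sub Q_Suc by simp
qed

lemma Q_anti: "m' \<le> m \<Longrightarrow> Q m \<subseteq> Q m'"
  by (induction m rule: dec_induct) (use Q_anti1 in auto)

lemma Q_sub_p: "Q m \<subseteq> p" using Q_anti[of 0 m] by simp

lemma Lv_lt: "Lv m < Lv (Suc m)"
  using nextL_prop[OF QPT[of "Suc m"], of "Lv m"] Lv_Suc by simp

lemma Lv_smono: "strict_mono Lv"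
  using Lv_lt by (simp add: strict_mono_Suc_iff)

lemma Lv_ge: "m \<le> Lv m"
  by (induction m) (use Lv_lt in auto, meson Suc_le_eq le_less_trans Lv_lt)

lemma stab1: "length \<nu> \<le> Lv m \<Longrightarrow> \<nu> \<in> Q (Suc m) \<longleftrightarrow> \<nu> \<in> Q m"
proof -
  assume a: "length \<nu> \<le> Lv m"
  interpret g: glue_loc H "Q m" "Lv m" "\<lambda>\<eta>. dc m (restr (Q m) \<eta>)" using QPT_gl by blast
  show ?thesis using g.glue_low[OF a] Q_Suc by simp
qed

lemma Lv_mono: "m \<le> m' \<Longrightarrow> Lv m \<le> Lv m'"
  by (induction m' rule: dec_induct) (use Lv_lt in auto, meson Lv_lt le_trans less_imp_le)

lemma stab: "m \<le> m' \<Longrightarrow> length \<nu> \<le> Lv m \<Longrightarrow> \<nu> \<in> Q m' \<longleftrightarrow> \<nu> \<in> Q m"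
proof (induction m' rule: dec_induct)
  case base then show ?case by simp
next
  case (step k)
  have "length \<nu> \<le> Lv k" using step Lv_mono by (meson le_trans)
  then show ?case using stab1 step by blast
qed

definition Qinf :: "'a list set" where "Qinf = (\<Inter>m. Q m)"

lemma stab_inf: "length \<nu> \<le> Lv m \<Longrightarrow> \<nu> \<in> Qinf \<longleftrightarrow> \<nu> \<in> Q m"
proof
  assume "\<nu> \<in> Qinf" then show "\<nu> \<in> Q m" by (simp add: Qinf_def)
next
  assume a: "length \<nu> \<le> Lv m" "\<nu> \<in> Q m"
  have "\<nu> \<in> Q m'" for m'
  proof (cases "m \<le> m'")
    case True then show ?thesis using stab a by blast
  next
    case False then show ?thesis using Q_anti a by (meson nat_le_linear subsetD)
  qed
  then show "\<nu> \<in> Qinf" by (simp add: Qinf_def)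
qed

lemma Qinf_sub: "Qinf \<subseteq> Q m" by (auto simp: Qinf_def)

lemma succ_inf: "length \<nu> < Lv m \<Longrightarrow> succ_of Qinf \<nu> = succ_of (Q m) \<nu>"
  using stab_inf[of "_ @ [_]" m] by (auto simp: succ_of_def)

lemma Qinf_PT: "Qinf \<in> PT H"
proof (rule PT_I)
  show "Qinf \<noteq> {}" using PT_nil[OF QPT] by (auto simp: Qinf_def)
next
  fix \<eta> k assume "\<eta> \<in> Qinf" then show "take k \<eta> \<in> Qinf" using PT_take[OF QPT] by (auto simp: Qinf_def)
next
  fix \<eta> l assume "\<eta> \<in> Qinf" "l < length \<eta>" then show "\<eta> ! l \<in> H l"
    using PT_nth[OF pPT] Qinf_sub[of 0] by auto
next
  fix \<nu> assume a: "\<nu> \<in> Qinf"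
  have l: "length \<nu> < Lv (Suc (length \<nu>))" using Lv_ge[of "Suc (length \<nu>)"] by (rule Suc_le_lessD)
  show "(\<exists>i. succ_of Qinf \<nu> = {i}) \<or> succ_of Qinf \<nu> = H (length \<nu>)"
  proof -
    have "\<nu> \<in> Q (Suc (length \<nu>))" using a Qinf_sub by blast
    from PT_succ[OF QPT this] show ?thesis unfolding succ_inf[OF l] .
  qed
next
  fix \<nu> assume a: "\<nu> \<in> Qinf"
  define m where "m = length \<nu>"
  have l: "length \<nu> \<le> Lv m" using Lv_ge m_def by simp
  have "\<nu> \<in> Q (Suc m)" using a Qinf_sub by blast
  then obtain \<nu>' where v: "\<nu>' \<in> Q (Suc m)" "take (length \<nu>) \<nu>' = \<nu>" "length \<nu>' < Lv (Suc m)" "spl H (Q (Suc m)) \<nu>'"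
    using nextL_prop[OF QPT[of "Suc m"], of "Lv m"] Lv_Suc l by auto
  have "\<nu>' \<in> Qinf" using stab_inf[of \<nu>' "Suc m"] v by simp
  moreover have "spl H Qinf \<nu>'" using succ_inf[OF v(3)] v(4) by (simp add: spl_def)
  ultimately show "\<exists>\<nu>'\<in>Qinf. take (length \<nu>) \<nu>' = \<nu> \<and> spl H Qinf \<nu>'" using v(2) by blast
qed

lemma Qinf_dec:
  assumes "\<eta> \<in> Qinf" "Lv m \<le> length \<eta>"
  shows "decides (restr Qinf \<eta>) m"
proof -
  interpret g: glue_loc H "Q m" "Lv m" "\<lambda>\<eta>. dc m (restr (Q m) \<eta>)" using QPT_gl by blast
  define \<eta>' where "\<eta>' = take (Lv m) \<eta>"
  have e1: "\<eta>' \<in> Q m" using PT_take[OF QPT] assms(1) Qinf_sub \<eta>'_def by blast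
  have e2: "length \<eta>' = Lv m" using assms(2) \<eta>'_def by simp
  have "restr Qinf \<eta> \<subseteq> restr (Q (Suc m)) \<eta>" using restr_mono Qinf_sub by blast
  also have "\<dots> \<subseteq> restr (Q (Suc m)) \<eta>'" using restr_take assms(2) \<eta>'_def by blast
  also have "\<dots> \<subseteq> dc m (restr (Q m) \<eta>')" using g.glue_restr[OF e1 e2] Q_Suc by simp
  finally have s: "restr Qinf \<eta> \<subseteq> dc m (restr (Q m) \<eta>')" .
  have "decides (dc m (restr (Q m) \<eta>')) m" using dc_prop restr_PT[OF QPT e1] by blast
  then show ?thesis using dec_mono restr_PT[OF Qinf_PT assms(1)] s by blast
qed

lemma fusion:
  "\<exists>q ll. q \<in> PT H \<and> q \<subseteq> p \<and> strict_mono ll \<and>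
     (\<forall>m \<eta>. \<eta> \<in> q \<longrightarrow> ll m \<le> length \<eta> \<longrightarrow>
        restr q \<eta> \<in> X m \<or> (\<forall>r\<in>PT H. r \<subseteq> restr q \<eta> \<longrightarrow> r \<notin> X m))"
  using Qinf_PT Qinf_sub[of 0] Lv_smono Qinf_dec unfolding decides_def
  by (intro exI[of _ Qinf] exI[of _ Lv]) auto

end

primrec ndseq :: "'a list set \<Rightarrow> 'a list \<Rightarrow> nat \<Rightarrow> 'a list" where
  "ndseq q \<eta> 0 = \<eta>"
| "ndseq q \<eta> (Suc k) = ndseq q \<eta> k @ [SOME i. ndseq q \<eta> k @ [i] \<in> q]"

lemma ndseq_len[simp]: "length (ndseq q \<eta> k) = length \<eta> + k"
  by (induction k) auto

lemma ndseq_in: "q \<in> PT H \<Longrightarrow> (\<And>n. H n \<noteq> {}) \<Longrightarrow> \<eta> \<in> q \<Longrightarrow> ndseq q \<eta> k \<in> q"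
proof (induction k)
  case 0 then show ?case by simp
next
  case (Suc k)
  then have "\<exists>i. ndseq q \<eta> k @ [i] \<in> q" using PT_ex_succ by blast
  then show ?case by (simp, rule someI_ex)
qed

lemma ndseq_pfx: "take (length \<eta> + k) (ndseq q \<eta> (k + d)) = ndseq q \<eta> k"
proof (induction d)
  case 0 then show ?case using ndseq_len[of q \<eta> k] by simp
next
  case (Suc d)
  have "length \<eta> + k \<le> length (ndseq q \<eta> (k + d))" by simp
  then show ?case using Suc by simp
qed

lemma branch_ex:
  assumes "q \<in> PT H" "\<And>n. H n \<noteq> {}" "\<eta> \<in> q"
  shows "\<exists>x. branch q x \<and> pre x (length \<eta>) = \<eta>"
proof -
  define x where "x n = ndseq q \<eta> (Suc n) ! n" for n
  have px: "pre x n = take n (ndseq q \<eta> n)" for n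
  proof (rule nth_equalityI)
    show "length (pre x n) = length (take n (ndseq q \<eta> n))" by simp
  next
    fix i assume i: "i < length (pre x n)"
    then have i2: "i < n" by simp
    have "ndseq q \<eta> (Suc i) = take (length \<eta> + Suc i) (ndseq q \<eta> (Suc i + (n - Suc i)))"
      using ndseq_pfx by metis
    also have "Suc i + (n - Suc i) = n" using i2 by simp
    finally have e: "ndseq q \<eta> (Suc i) = take (length \<eta> + Suc i) (ndseq q \<eta> n)" .
    have "pre x n ! i = ndseq q \<eta> (Suc i) ! i" using i2 x_def by simp
    also have "\<dots> = ndseq q \<eta> n ! i" using e by simp
    finally show "pre x n ! i = take n (ndseq q \<eta> n) ! i" using i2 by simp
  qed
  have "branch q x" unfolding branch_def px using PT_take[OF assms(1) ndseq_in[OF assms]] by blast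
  moreover have "pre x (length \<eta>) = \<eta>"
    using px[of "length \<eta>"] ndseq_pfx[of \<eta> 0 q "length \<eta>"] by simp
  ultimately show ?thesis by blast
qed

lemma branch_split:
  assumes "q \<in> PT H" "branch q x"
  shows "\<exists>k\<ge>L. spl H q (pre x k)"
proof (rule ccontr)
  assume ns: "\<not> (\<exists>k\<ge>L. spl H q (pre x k))"
  have claim: "\<forall>\<nu>\<in>q. length \<nu> = L + d \<and> take L \<nu> = pre x L \<longrightarrow> \<nu> = pre x (L + d)" for d
  proof (induction d)
    case 0 then show ?case by auto
  next
    case (Suc d)
    show ?case
    proof (intro ballI impI)
      fix \<nu> assume v: "\<nu> \<in> q" "length \<nu> = L + Suc d \<and> take L \<nu> = pre x L"
      define \<nu>' where "\<nu>' = take (L + d) \<nu>"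
      have "\<nu>' \<in> q" using PT_take[OF assms(1) v(1)] \<nu>'_def by simp
      moreover have "length \<nu>' = L + d" using v(2) \<nu>'_def by simp
      moreover have "take L \<nu>' = pre x L" using v(2) \<nu>'_def by (simp add: min_absorb1)
      ultimately have e: "\<nu>' = pre x (L + d)" using Suc.IH by blast
      have vv: "\<nu> = \<nu>' @ [\<nu> ! (L + d)]"
      proof -
        have "L + d < length \<nu>" using v(2) by simp
        then have "take (Suc (L + d)) \<nu> = \<nu>' @ [\<nu> ! (L + d)]" unfolding \<nu>'_def by (rule take_Suc_conv_app_nth)
        moreover have "take (Suc (L + d)) \<nu> = \<nu>" using v(2) by simp
        ultimately show ?thesis by simp
      qed
      have "\<not> spl H q (pre x (L + d))" using ns by simp
      then obtain i where si: "succ_of q (pre x (L + d)) = {i}"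
        using PT_succ[OF assms(1)] assms(2) unfolding branch_def spl_def by blast
      have "x (L + d) \<in> succ_of q (pre x (L + d))"
        using assms(2) unfolding branch_def by (simp add: pre_Suc[symmetric])
      moreover have "\<nu> ! (L + d) \<in> succ_of q (pre x (L + d))" using v(1) vv e by simp
      ultimately have "\<nu> ! (L + d) = x (L + d)" using si by simp
      then show "\<nu> = pre x (L + Suc d)" using vv e by (simp add: pre_Suc)
    qed
  qed
  have "pre x L \<in> q" using assms(2) unfolding branch_def by blast
  then obtain \<nu> where v: "\<nu> \<in> q" "take L \<nu> = pre x L" "spl H q \<nu>"
    using PT_split[OF assms(1)] by fastforce
  have l: "L \<le> length \<nu>" using v(2) take_len_le by fastforce
  then have "\<nu> = pre x (L + (length \<nu> - L))" using claim[of "length \<nu> - L"] v by simp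
  then have "spl H q (pre x (length \<nu>))" using v(3) l by simp
  then show False using ns l by blast
qed

lemma uf_int: "ultrafilter_on_nat U \<Longrightarrow> A \<in> U \<Longrightarrow> B \<in> U \<Longrightarrow> A \<inter> B \<in> U"
  unfolding ultrafilter_on_nat_def by blast
lemma uf_up: "ultrafilter_on_nat U \<Longrightarrow> A \<in> U \<Longrightarrow> A \<subseteq> B \<Longrightarrow> B \<in> U"
  unfolding ultrafilter_on_nat_def by blast
lemma uf_UNIV: "ultrafilter_on_nat U \<Longrightarrow> UNIV \<in> U"
  unfolding ultrafilter_on_nat_def by blast
lemma uf_empty: "ultrafilter_on_nat U \<Longrightarrow> {} \<notin> U"
  unfolding ultrafilter_on_nat_def by blast
lemma uf_compl: "ultrafilter_on_nat U \<Longrightarrow> A \<in> U \<or> - A \<in> U"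
  unfolding ultrafilter_on_nat_def by blast

lemma uf_fin_int:
  assumes "ultrafilter_on_nat U" "finite S" "\<forall>x\<in>S. g x \<in> U"
  shows "\<Inter>(g ` S) \<in> U"
  using assms(2,3)
proof (induction S rule: finite_induct)
  case empty then show ?case using uf_UNIV[OF assms(1)] by simp
next
  case (insert a F)
  then show ?case using uf_int[OF assms(1)] by simp
qed

lemma uf_fin_principal:
  assumes "ultrafilter_on_nat U" "finite F" "F \<in> U"
  shows "\<exists>k. {k} \<in> U"
  using assms(2,3)
proof (induction F rule: finite_induct)
  case empty then show ?case using uf_empty[OF assms(1)] by simp
next
  case (insert a F)
  show ?case
  proof (cases "{a} \<in> U")
    case True then show ?thesis by blast
  next
    case False
    then have "- {a} \<in> U" using uf_compl[OF assms(1)] by blast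
    then have "insert a F \<inter> - {a} \<in> U" using uf_int[OF assms(1)] insert.prems by blast
    then have "F \<in> U" using uf_up[OF assms(1)] by (metis Diff_eq Diff_insert_absorb Int_Diff Int_lower1 insert.hyps(2))
    then show ?thesis using insert.IH by blast
  qed
qed

lemma take_trans: "take (length a) b = a \<Longrightarrow> take (length b) c = b \<Longrightarrow> take (length a) c = a"
proof -
  assume 1: "take (length a) b = a" and 2: "take (length b) c = b"
  have l: "length a \<le> length b" using 1 by (rule take_len_le)
  have "take (length a) c = take (length a) (take (length b) c)" using l by (simp add: min_absorb1)
  then show ?thesis using 1 2 by simp
qed

locale S1 =
  fixes H :: "nat \<Rightarrow> 'a set" and U :: "nat set set" and X :: "nat \<Rightarrow> 'a list set set"
    and q :: "'a list set" and ll :: "nat \<Rightarrow> nat" and c :: bool and \<sigma> :: "'a list"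
  assumes Hfin: "\<And>n. finite (H n)" and Hne: "\<And>n. H n \<noteq> {}"
    and uf: "ultrafilter_on_nat U" and nm: "set_name (PT H) X"
    and qPT: "q \<in> PT H" and llm: "strict_mono ll"
    and dec: "\<And>m \<eta>. \<eta> \<in> q \<Longrightarrow> ll m \<le> length \<eta> \<Longrightarrow>
        restr q \<eta> \<in> X m \<or> (\<forall>r\<in>PT H. r \<subseteq> restr q \<eta> \<longrightarrow> r \<notin> X m)"
    and sq: "\<sigma> \<in> q"
    and cone: "\<And>\<nu>. \<nu> \<in> q \<Longrightarrow> take (length \<sigma>) \<nu> = \<sigma> \<Longrightarrow> \<exists>x. branch q x \<and> pre x (length \<nu>) = \<nu> \<and>
        (if c then {m. restr q (pre x (ll m)) \<in> X m} else - {m. restr q (pre x (ll m)) \<in> X m}) \<in> U"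
begin

definition Yc :: "(nat \<Rightarrow> 'a) \<Rightarrow> nat set" where
  "Yc x = (if c then {m. restr q (pre x (ll m)) \<in> X m} else - {m. restr q (pre x (ll m)) \<in> X m})"

definition CN :: "'a list set" where "CN = {\<nu> \<in> q. take (length \<sigma>) \<nu> = \<sigma>}"

definition B :: "'a list \<Rightarrow> nat \<Rightarrow> 'a" where
  "B \<nu> = (SOME x. branch q x \<and> pre x (length \<nu>) = \<nu> \<and> Yc x \<in> U)"

lemma B_prop: "\<nu> \<in> CN \<Longrightarrow> branch q (B \<nu>) \<and> pre (B \<nu>) (length \<nu>) = \<nu> \<and> Yc (B \<nu>) \<in> U"
proof -
  assume "\<nu> \<in> CN"
  then have "\<nu> \<in> q" "take (length \<sigma>) \<nu> = \<sigma>" by (auto simp: CN_def)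
  from cone[OF this] have "\<exists>x. branch q x \<and> pre x (length \<nu>) = \<nu> \<and> Yc x \<in> U"
    unfolding Yc_def .
  then show ?thesis unfolding B_def by (rule someI_ex)
qed

definition As :: "nat \<Rightarrow> nat set" where
  "As n = \<Inter>((\<lambda>\<nu>. Yc (B \<nu>)) ` {\<nu> \<in> CN. length \<nu> \<le> n})"

lemma As_U: "As n \<in> U"
proof -
  have "finite {\<nu> \<in> CN. length \<nu> \<le> n}"
  proof (rule finite_subset)
    show "{\<nu> \<in> CN. length \<nu> \<le> n} \<subseteq> {\<nu>\<in>q. length \<nu> \<le> n}" unfolding CN_def by blast
    show "finite {\<nu>\<in>q. length \<nu> \<le> n}" by (rule PT_finite_level[OF qPT Hfin])
  qed
  moreover have "\<forall>\<nu>\<in>{\<nu> \<in> CN. length \<nu> \<le> n}. Yc (B \<nu>) \<in> U" using B_prop by blast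
  ultimately show ?thesis unfolding As_def by (rule uf_fin_int[OF uf])
qed

lemma As_sub: "\<nu> \<in> CN \<Longrightarrow> length \<nu> \<le> n \<Longrightarrow> As n \<subseteq> Yc (B \<nu>)"
  unfolding As_def by blast

lemma CN_take: "\<nu> \<in> CN \<Longrightarrow> length \<sigma> \<le> k \<Longrightarrow> take k \<nu> \<in> CN"
  unfolding CN_def using PT_take[OF qPT] by (auto simp: min_absorb1)

lemma CN_I: "\<nu> \<in> q \<Longrightarrow> take (length \<sigma>) \<nu> = \<sigma> \<Longrightarrow> \<nu> \<in> CN"
  unfolding CN_def by simp

definition ak :: "'a list \<Rightarrow> nat" where
  "ak \<nu> = (LEAST k. length \<sigma> \<le> k \<and> pre (B (take k \<nu>)) (length \<nu>) = \<nu>)"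

definition pi :: "'a list \<Rightarrow> nat \<Rightarrow> 'a" where
  "pi \<nu> = B (take (ak \<nu>) \<nu>)"

lemma CN_len: "\<nu> \<in> CN \<Longrightarrow> length \<sigma> \<le> length \<nu>"
proof -
  assume "\<nu> \<in> CN"
  then have "take (length \<sigma>) \<nu> = \<sigma>" by (simp add: CN_def)
  then show ?thesis by (rule take_len_le)
qed

lemma ak_prop:
  assumes "\<nu> \<in> CN"
  shows "length \<sigma> \<le> ak \<nu> \<and> ak \<nu> \<le> length \<nu> \<and> pre (B (take (ak \<nu>) \<nu>)) (length \<nu>) = \<nu>"
proof -
  have P: "length \<sigma> \<le> length \<nu> \<and> pre (B (take (length \<nu>) \<nu>)) (length \<nu>) = \<nu>"
    using B_prop[OF assms] CN_len[OF assms] by simp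
  have "length \<sigma> \<le> ak \<nu> \<and> pre (B (take (ak \<nu>) \<nu>)) (length \<nu>) = \<nu>"
    unfolding ak_def by (rule LeastI[of _ "length \<nu>"]) (rule P)
  moreover have "ak \<nu> \<le> length \<nu>" unfolding ak_def by (rule Least_le) (rule P)
  ultimately show ?thesis by simp
qed

lemma pi_prop:
  assumes "\<nu> \<in> CN"
  shows "branch q (pi \<nu>) \<and> pre (pi \<nu>) (length \<nu>) = \<nu> \<and> (\<exists>\<mu>\<in>CN. length \<mu> \<le> length \<nu> \<and> pi \<nu> = B \<mu>)"
proof -
  have a: "length \<sigma> \<le> ak \<nu>" "ak \<nu> \<le> length \<nu>" "pre (B (take (ak \<nu>) \<nu>)) (length \<nu>) = \<nu>"
    using ak_prop[OF assms] by auto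
  have m: "take (ak \<nu>) \<nu> \<in> CN" using CN_take[OF assms a(1)] .
  show ?thesis unfolding pi_def using a m B_prop[OF m]
    by (intro conjI) (auto intro!: bexI[of _ "take (ak \<nu>) \<nu>"])
qed

lemma CN_ext: "\<nu> \<in> CN \<Longrightarrow> \<nu> @ [pi \<nu> (length \<nu>)] \<in> CN"
proof -
  assume a: "\<nu> \<in> CN"
  have "\<nu> @ [pi \<nu> (length \<nu>)] = pre (pi \<nu>) (Suc (length \<nu>))" using pi_prop[OF a] by (simp add: pre_Suc)
  then have "\<nu> @ [pi \<nu> (length \<nu>)] \<in> q" using pi_prop[OF a] unfolding branch_def by metis
  moreover have "take (length \<sigma>) (\<nu> @ [pi \<nu> (length \<nu>)]) = \<sigma>" using a CN_len[OF a] by (simp add: CN_def)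
  ultimately show ?thesis by (rule CN_I)
qed

lemma pi_coh:
  assumes "\<nu> \<in> CN"
  shows "pi (\<nu> @ [pi \<nu> (length \<nu>)]) = pi \<nu>"
proof -
  define a where "a = pi \<nu> (length \<nu>)"
  define \<nu>' where "\<nu>' = \<nu> @ [a]"
  define k0 where "k0 = ak \<nu>"
  have k: "length \<sigma> \<le> k0" "k0 \<le> length \<nu>" "pre (B (take k0 \<nu>)) (length \<nu>) = \<nu>"
    using ak_prop[OF assms] k0_def by auto
  have tk: "take k0 \<nu>' = take k0 \<nu>" using k(2) \<nu>'_def by simp
  have P0: "length \<sigma> \<le> k0 \<and> pre (B (take k0 \<nu>')) (length \<nu>') = \<nu>'"
  proof -
    have "pre (B (take k0 \<nu>)) (length \<nu>') = pre (pi \<nu>) (Suc (length \<nu>))"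
      using \<nu>'_def k0_def pi_def by simp
    also have "\<dots> = \<nu>'" using pi_prop[OF assms] \<nu>'_def a_def by (simp add: pre_Suc)
    finally show ?thesis using tk k(1) by simp
  qed
  have "ak \<nu>' = k0" unfolding ak_def
  proof (rule Least_equality)
    show "length \<sigma> \<le> k0 \<and> pre (B (take k0 \<nu>')) (length \<nu>') = \<nu>'" by (rule P0)
  next
    fix y assume y: "length \<sigma> \<le> y \<and> pre (B (take y \<nu>')) (length \<nu>') = \<nu>'"
    show "k0 \<le> y"
    proof (rule ccontr)
      assume "\<not> k0 \<le> y"
      then have yl: "y < k0" by simp
      have ty: "take y \<nu>' = take y \<nu>" using yl k(2) \<nu>'_def by simp
      have "pre (B (take y \<nu>)) (length \<nu>) = take (length \<nu>) (pre (B (take y \<nu>)) (length \<nu>'))"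
        using \<nu>'_def by (simp add: take_pre)
      also have "\<dots> = \<nu>" using y ty \<nu>'_def by simp
      finally have "length \<sigma> \<le> y \<and> pre (B (take y \<nu>)) (length \<nu>) = \<nu>" using y by simp
      then have "ak \<nu> \<le> y" unfolding ak_def by (rule Least_le)
      then show False using yl k0_def by simp
    qed
  qed
  then have "pi \<nu>' = B (take k0 \<nu>')" unfolding pi_def by simp
  also have "\<dots> = pi \<nu>" using tk k0_def by (simp add: pi_def)
  finally show ?thesis using \<nu>'_def a_def by simp
qed

end

locale S2 = S1 +
  fixes W :: "nat set"
  assumes WU: "W \<in> U" and Wfin: "\<And>n. finite (W - As n)"
begin

definition f :: "nat \<Rightarrow> nat" where "f n = (SOME b. \<forall>m\<in>W - As n. m < b)"

lemma f_prop: "m \<in> W \<Longrightarrow> f n \<le> m \<Longrightarrow> m \<in> As n"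
proof -
  assume a: "m \<in> W" "f n \<le> m"
  have "\<exists>b. \<forall>m\<in>W - As n. m < b" using Wfin[of n] unfolding finite_nat_set_iff_bounded .
  then have "\<forall>m\<in>W - As n. m < f n" unfolding f_def by (rule someI_ex)
  then show ?thesis using a by (meson DiffI not_le)
qed

definition s :: "nat \<Rightarrow> nat" where
  "s L = (SOME b. \<forall>\<mu>\<in>{\<mu>\<in>CN. length \<mu> \<le> L}. \<exists>k<b. L \<le> k \<and> spl H q (pre (B \<mu>) k))"

lemma s_prop: "\<mu> \<in> CN \<Longrightarrow> length \<mu> \<le> L \<Longrightarrow> \<exists>k<s L. L \<le> k \<and> spl H q (pre (B \<mu>) k)"
proof -
  assume a: "\<mu> \<in> CN" "length \<mu> \<le> L"
  have fin: "finite {\<mu>\<in>CN. length \<mu> \<le> L}"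
  proof (rule finite_subset)
    show "{\<nu> \<in> CN. length \<nu> \<le> L} \<subseteq> {\<nu>\<in>q. length \<nu> \<le> L}" unfolding CN_def by blast
    show "finite {\<nu>\<in>q. length \<nu> \<le> L}" by (rule PT_finite_level[OF qPT Hfin])
  qed
  have "\<forall>\<mu>\<in>{\<mu>\<in>CN. length \<mu> \<le> L}. \<exists>k. L \<le> k \<and> spl H q (pre (B \<mu>) k)"
  proof
    fix \<mu> assume "\<mu> \<in> {\<mu>\<in>CN. length \<mu> \<le> L}"
    then have "branch q (B \<mu>)" using B_prop by blast
    then show "\<exists>k. L \<le> k \<and> spl H q (pre (B \<mu>) k)" using branch_split[OF qPT] by blast
  qed
  from finite_bound[OF fin this]
  have "\<exists>b. \<forall>\<mu>\<in>{\<mu>\<in>CN. length \<mu> \<le> L}. \<exists>k<b. L \<le> k \<and> spl H q (pre (B \<mu>) k)" .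
  then have "\<forall>\<mu>\<in>{\<mu>\<in>CN. length \<mu> \<le> L}. \<exists>k<s L. L \<le> k \<and> spl H q (pre (B \<mu>) k)"
    unfolding s_def by (rule someI_ex)
  then show ?thesis using a by blast
qed

definition E0 :: "nat \<Rightarrow> nat" where "E0 L = Suc (max L (s L))"

primrec cs :: "nat \<Rightarrow> nat" where
  "cs 0 = max (length \<sigma>) (f (length \<sigma>))"
| "cs (Suc j) = max (Suc (cs j)) (max (E0 (ll (cs j))) (f (E0 (ll (cs j)))))"

definition E :: "nat \<Rightarrow> nat" where "E j = E0 (ll (cs j))"

definition Pj :: "nat \<Rightarrow> nat" where "Pj j = (case j of 0 \<Rightarrow> length \<sigma> | Suc i \<Rightarrow> E i)"

lemma ll_ge: "m \<le> ll m" using strict_mono_imp_increasing[OF llm] .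
lemma ll_less: "m < m' \<Longrightarrow> ll m < ll m'" using llm by (simp add: strict_mono_def)

lemma cs_lt: "cs j < cs (Suc j)" by simp
lemma cs_smono: "strict_mono cs" using cs_lt by (simp add: strict_mono_Suc_iff)
lemma cs_ge: "j \<le> cs j" using strict_mono_imp_increasing[OF cs_smono] .
lemma cs_mono: "i \<le> j \<Longrightarrow> cs i \<le> cs j"
  using cs_smono by (metis le_less strict_mono_def)
lemma cs_less: "i < j \<Longrightarrow> cs i < cs j"
  using cs_smono by (simp add: strict_mono_def)

lemma E_gt: "ll (cs j) < E j" unfolding E_def E0_def by simp
lemma E_s: "s (ll (cs j)) < E j" unfolding E_def E0_def by simp
lemma E_le: "E j \<le> cs (Suc j)" unfolding E_def by simp
lemma fE_le: "f (E j) \<le> cs (Suc j)" unfolding E_def by simp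

lemma E_mono: "i \<le> j \<Longrightarrow> E i \<le> E j"
proof -
  assume "i \<le> j"
  then show ?thesis
  proof (cases "i = j")
    case False
    then have "Suc i \<le> j" using \<open>i \<le> j\<close> by simp
    then have "E i \<le> cs j" using E_le cs_mono le_trans by blast
    also have "\<dots> \<le> ll (cs j)" using ll_ge .
    also have "\<dots> \<le> E j" using E_gt less_imp_le by blast
    finally show ?thesis .
  qed simp
qed

lemma Pj_prop: "Pj j \<le> cs j \<and> f (Pj j) \<le> cs j \<and> length \<sigma> \<le> Pj j"
proof (cases j)
  case 0 then show ?thesis by (simp add: Pj_def)
next
  case (Suc i)
  have "length \<sigma> \<le> cs i" using cs_mono[of 0 i] by simp
  also have "\<dots> \<le> ll (cs i)" using ll_ge .
  also have "\<dots> \<le> E i" using E_gt less_imp_le by blast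
  finally show ?thesis using Suc E_le fE_le by (simp add: Pj_def)
qed

lemma Pj_E: "i < j \<Longrightarrow> E i \<le> Pj j"
proof (cases j)
  case 0 then show "i < j \<Longrightarrow> ?thesis" by simp
next
  case (Suc j') then show "i < j \<Longrightarrow> ?thesis" using E_mono by (simp add: Pj_def)
qed

lemma cover: "cs 0 \<le> m \<Longrightarrow> \<exists>j. cs j \<le> m \<and> m < cs (Suc j)"
proof -
  assume a: "cs 0 \<le> m"
  have ex: "m < cs (Suc m)" using cs_ge[of "Suc m"] by simp
  define j0 where "j0 = (LEAST j. m < cs j)"
  have j0: "m < cs j0" unfolding j0_def using ex by (rule LeastI)
  have "j0 \<noteq> 0"
  proof
    assume "j0 = 0"
    then have "m < cs 0" using j0 by (simp only:)
    then show False using a by linarith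
  qed
  then obtain j where j: "j0 = Suc j" by (cases j0) auto
  have "\<not> m < cs j" using j j0_def not_less_Least[of j "\<lambda>j. m < cs j"] by simp
  then show ?thesis using j j0 by (intro exI[of _ j]) simp
qed

end

locale S3 = S2 +
  fixes J :: "nat set"
  assumes Jco: "\<And>n. \<exists>j\<ge>n. j \<notin> J"
    and JU: "{m. \<exists>j\<in>J. cs j \<le> m \<and> m < cs (Suc j)} \<in> U"
begin

definition SL :: "nat set" where
  "SL = {k. \<exists>j. j \<notin> J \<and> ll (cs j) \<le> k \<and> k < E j}"

definition T :: "'a list set" where
  "T = {\<eta> \<in> q. take (length \<eta>) \<sigma> = \<eta> \<or> (take (length \<sigma>) \<eta> = \<sigma> \<and>
     (\<forall>k. length \<sigma> \<le> k \<longrightarrow> k < length \<eta> \<longrightarrow>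
        (k \<in> SL \<and> spl H q (take k \<eta>)) \<or> \<eta> ! k = pi (take k \<eta>) k))}"

definition u :: "nat set" where
  "u = W \<inter> {m. \<exists>j\<in>J. cs j \<le> m \<and> m < cs (Suc j)}"

lemma u_U: "u \<in> U" unfolding u_def using uf_int[OF uf WU JU] .

lemma T_sub: "T \<subseteq> q" unfolding T_def by blast

lemma T_sigma: "\<sigma> \<in> T" unfolding T_def using sq by simp

lemma T_ge:
  assumes "\<eta> \<in> T" "length \<sigma> \<le> length \<eta>"
  shows "take (length \<sigma>) \<eta> = \<sigma> \<and> (\<forall>k. length \<sigma> \<le> k \<longrightarrow> k < length \<eta> \<longrightarrow>
        (k \<in> SL \<and> spl H q (take k \<eta>)) \<or> \<eta> ! k = pi (take k \<eta>) k)"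
proof -
  have "take (length \<eta>) \<sigma> = \<eta> \<or> (take (length \<sigma>) \<eta> = \<sigma> \<and>
     (\<forall>k. length \<sigma> \<le> k \<longrightarrow> k < length \<eta> \<longrightarrow>
        (k \<in> SL \<and> spl H q (take k \<eta>)) \<or> \<eta> ! k = pi (take k \<eta>) k))"
    using assms(1) unfolding T_def by blast
  then show ?thesis
  proof
    assume h: "take (length \<eta>) \<sigma> = \<eta>"
    then have "\<eta> = \<sigma>" using assms(2) by (metis take_all)
    then show ?thesis by simp
  qed
qed

lemma T_lt: "\<eta> \<in> T \<Longrightarrow> length \<eta> < length \<sigma> \<Longrightarrow> take (length \<eta>) \<sigma> = \<eta>"
proof -
  assume a: "\<eta> \<in> T" "length \<eta> < length \<sigma>"
  then have "take (length \<eta>) \<sigma> = \<eta> \<or> take (length \<sigma>) \<eta> = \<sigma>" unfolding T_def by blast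
  moreover have "take (length \<sigma>) \<eta> \<noteq> \<sigma>"
  proof
    assume "take (length \<sigma>) \<eta> = \<sigma>"
    then have "length \<sigma> \<le> length \<eta>" by (rule take_len_le)
    then show False using a(2) by simp
  qed
  ultimately show ?thesis by blast
qed

lemma T_CN: "\<eta> \<in> T \<Longrightarrow> length \<sigma> \<le> length \<eta> \<Longrightarrow> \<eta> \<in> CN"
  using T_ge T_sub by (auto simp: CN_def)

lemma T_snoc:
  assumes "\<eta> \<in> T" "length \<sigma> \<le> length \<eta>"
  shows "\<eta>@[i] \<in> T \<longleftrightarrow> \<eta>@[i] \<in> q \<and> ((length \<eta> \<in> SL \<and> spl H q \<eta>) \<or> i = pi \<eta> (length \<eta>))"
proof -
  have g: "take (length \<sigma>) \<eta> = \<sigma>" "\<forall>k. length \<sigma> \<le> k \<longrightarrow> k < length \<eta> \<longrightarrow>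
        (k \<in> SL \<and> spl H q (take k \<eta>)) \<or> \<eta> ! k = pi (take k \<eta>) k"
    using T_ge[OF assms] by auto
  have n1: "take (length (\<eta>@[i])) \<sigma> \<noteq> \<eta>@[i]"
  proof
    assume "take (length (\<eta>@[i])) \<sigma> = \<eta>@[i]"
    then have "length (\<eta>@[i]) \<le> length \<sigma>" by (rule take_len_le)
    then show False using assms(2) by simp
  qed
  have t1: "take (length \<sigma>) (\<eta>@[i]) = \<sigma>" using g(1) assms(2) by simp
  have eqk: "\<And>k. k < length \<eta> \<Longrightarrow> take k (\<eta>@[i]) = take k \<eta> \<and> (\<eta>@[i]) ! k = \<eta> ! k"
    by (simp add: nth_append)
  have "\<eta>@[i] \<in> T \<longleftrightarrow> \<eta>@[i] \<in> q \<and> (\<forall>k. length \<sigma> \<le> k \<longrightarrow> k < length (\<eta>@[i]) \<longrightarrow>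
        (k \<in> SL \<and> spl H q (take k (\<eta>@[i]))) \<or> (\<eta>@[i]) ! k = pi (take k (\<eta>@[i])) k)"
    unfolding T_def using n1 t1 by blast
  also have "\<dots> \<longleftrightarrow> \<eta>@[i] \<in> q \<and> ((length \<eta> \<in> SL \<and> spl H q \<eta>) \<or> i = pi \<eta> (length \<eta>))"
  proof (intro iffI conjI)
    assume h: "\<eta>@[i] \<in> q \<and> (\<forall>k. length \<sigma> \<le> k \<longrightarrow> k < length (\<eta>@[i]) \<longrightarrow>
        (k \<in> SL \<and> spl H q (take k (\<eta>@[i]))) \<or> (\<eta>@[i]) ! k = pi (take k (\<eta>@[i])) k)"
    then show "\<eta>@[i] \<in> q" by blast
    have "length \<eta> < length (\<eta>@[i])" by simp
    from h[THEN conjunct2, rule_format, OF assms(2) this]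
    have "(length \<eta> \<in> SL \<and> spl H q (take (length \<eta>) (\<eta>@[i]))) \<or> (\<eta>@[i]) ! length \<eta> = pi (take (length \<eta>) (\<eta>@[i])) (length \<eta>)" .
    then show "(length \<eta> \<in> SL \<and> spl H q \<eta>) \<or> i = pi \<eta> (length \<eta>)" by simp
  next
    assume h: "\<eta>@[i] \<in> q \<and> ((length \<eta> \<in> SL \<and> spl H q \<eta>) \<or> i = pi \<eta> (length \<eta>))"
    show "\<eta>@[i] \<in> q" using h by blast
    show "\<forall>k. length \<sigma> \<le> k \<longrightarrow> k < length (\<eta>@[i]) \<longrightarrow>
        (k \<in> SL \<and> spl H q (take k (\<eta>@[i]))) \<or> (\<eta>@[i]) ! k = pi (take k (\<eta>@[i])) k"
    proof (intro allI impI)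
      fix k assume k: "length \<sigma> \<le> k" "k < length (\<eta>@[i])"
      show "(k \<in> SL \<and> spl H q (take k (\<eta>@[i]))) \<or> (\<eta>@[i]) ! k = pi (take k (\<eta>@[i])) k"
      proof (cases "k < length \<eta>")
        case True
        then show ?thesis using g(2) k(1) eqk[OF True] by simp
      next
        case False
        then have "k = length \<eta>" using k(2) by simp
        then show ?thesis using h by simp
      qed
    qed
  qed
  finally show ?thesis .
qed

lemma T_succ_ge:
  assumes "\<eta> \<in> T" "length \<sigma> \<le> length \<eta>"
  shows "succ_of T \<eta> = (if length \<eta> \<in> SL \<and> spl H q \<eta> then succ_of q \<eta> else {pi \<eta> (length \<eta>)})"
proof -
  have c: "\<eta> \<in> CN" using T_CN[OF assms] .
  have "\<eta> @ [pi \<eta> (length \<eta>)] \<in> q" using CN_ext[OF c] by (simp add: CN_def)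
  then show ?thesis using T_snoc[OF assms] by (auto simp: succ_of_def)
qed

lemma T_succ_lt:
  assumes "\<eta> \<in> T" "length \<eta> < length \<sigma>"
  shows "succ_of T \<eta> = {\<sigma> ! length \<eta>}"
proof (rule set_eqI)
  fix i
  have e: "take (length \<eta>) \<sigma> = \<eta>" using T_lt[OF assms] .
  have ts: "take (Suc (length \<eta>)) \<sigma> = \<eta> @ [\<sigma> ! length \<eta>]"
    using e assms(2) by (metis take_Suc_conv_app_nth)
  have tq: "take (Suc (length \<eta>)) \<sigma> \<in> q" using PT_take[OF qPT sq] .
  show "i \<in> succ_of T \<eta> \<longleftrightarrow> i \<in> {\<sigma> ! length \<eta>}"
  proof
    assume "i \<in> succ_of T \<eta>"
    then have m: "\<eta>@[i] \<in> T" by simp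
    show "i \<in> {\<sigma> ! length \<eta>}"
    proof (cases "Suc (length \<eta>) < length \<sigma>")
      case True
      then have "take (Suc (length \<eta>)) \<sigma> = \<eta>@[i]" using T_lt[OF m] by simp
      then show ?thesis using ts by simp
    next
      case False
      then have "length (\<eta>@[i]) = length \<sigma>" using assms(2) by simp
      then have l: "length \<sigma> \<le> length (\<eta>@[i])" by simp
      have "take (length \<sigma>) (\<eta>@[i]) = \<sigma>" using T_ge[OF m l] by blast
      then have e2: "\<eta>@[i] = \<sigma>" using \<open>length (\<eta>@[i]) = length \<sigma>\<close> by (metis take_all order_refl)
      have "take (Suc (length \<eta>)) \<sigma> = \<sigma>" using \<open>length (\<eta>@[i]) = length \<sigma>\<close> by simp
      then have "take (Suc (length \<eta>)) \<sigma> = \<eta>@[i]" using e2 by simp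
      then show ?thesis using ts by simp
    qed
  next
    assume "i \<in> {\<sigma> ! length \<eta>}"
    then have "\<eta>@[i] = take (Suc (length \<eta>)) \<sigma>" using ts by simp
    moreover have "take (length (take (Suc (length \<eta>)) \<sigma>)) \<sigma> = take (Suc (length \<eta>)) \<sigma>"
      using assms(2) by (simp add: min_absorb2)
    ultimately have "\<eta>@[i] \<in> T" using tq unfolding T_def by simp
    then show "i \<in> succ_of T \<eta>" by simp
  qed
qed

lemma T_ex_succ: "\<eta> \<in> T \<Longrightarrow> \<exists>i. \<eta>@[i] \<in> T"
proof -
  assume a: "\<eta> \<in> T"
  show ?thesis
  proof (cases "length \<eta> < length \<sigma>")
    case True then show ?thesis using T_succ_lt[OF a True] by (auto simp: succ_of_def)
  next
    case False
    then have l: "length \<sigma> \<le> length \<eta>" by simp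
    show ?thesis
    proof (cases "length \<eta> \<in> SL \<and> spl H q \<eta>")
      case True
      then have "succ_of T \<eta> = H (length \<eta>)" using T_succ_ge[OF a l] by (simp add: spl_def)
      then show ?thesis using Hne by (metis ex_in_conv succ_of_iff)
    next
      case False
      then show ?thesis using T_succ_ge[OF a l] by (auto simp: succ_of_def)
    qed
  qed
qed

lemma T_take: "\<eta> \<in> T \<Longrightarrow> take k \<eta> \<in> T"
proof -
  assume a: "\<eta> \<in> T"
  have tq: "take k \<eta> \<in> q" using PT_take[OF qPT] a T_sub by blast
  show ?thesis
  proof (cases "length \<sigma> \<le> length \<eta>")
    case False
    then have e: "take (length \<eta>) \<sigma> = \<eta>" using T_lt a by simp
    have "take (length (take k \<eta>)) \<sigma> = take k \<eta>"
    proof -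
      have "take (length (take k \<eta>)) \<sigma> = take (min k (length \<eta>)) (take (length \<eta>) \<sigma>)" using False by (simp add: min_def)
      also have "\<dots> = take k \<eta>" using e by (simp add: min_def)
      finally show ?thesis .
    qed
    then show ?thesis using tq unfolding T_def by blast
  next
    case True
    have g: "take (length \<sigma>) \<eta> = \<sigma>" "\<forall>k. length \<sigma> \<le> k \<longrightarrow> k < length \<eta> \<longrightarrow>
        (k \<in> SL \<and> spl H q (take k \<eta>)) \<or> \<eta> ! k = pi (take k \<eta>) k"
      using T_ge[OF a True] by auto
    show ?thesis
    proof (cases "k \<le> length \<sigma>")
      case True
      have "take (length (take k \<eta>)) \<sigma> = take k \<eta>"
      proof -
        have "length (take k \<eta>) = k" using True \<open>length \<sigma> \<le> length \<eta>\<close> by simp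
        moreover have "take k \<sigma> = take k (take (length \<sigma>) \<eta>)" using g(1) by simp
        ultimately show ?thesis using True by (simp add: min_absorb1)
      qed
      then show ?thesis using tq unfolding T_def by blast
    next
      case False
      have t1: "take (length \<sigma>) (take k \<eta>) = \<sigma>" using g(1) False by (simp add: min_absorb1)
      have "\<forall>k'. length \<sigma> \<le> k' \<longrightarrow> k' < length (take k \<eta>) \<longrightarrow>
        (k' \<in> SL \<and> spl H q (take k' (take k \<eta>))) \<or> take k \<eta> ! k' = pi (take k' (take k \<eta>)) k'"
        using g(2) by (simp add: min_absorb1)
      then show ?thesis using tq t1 unfolding T_def by blast
    qed
  qed
qed

end

context S3
begin

declare cs.simps(2)[simp del]

lemma T_PT: "T \<in> PT H"
proof (rule PT_I)
  show "T \<noteq> {}" using T_sigma by blast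
next
  fix \<eta> k assume "\<eta> \<in> T" then show "take k \<eta> \<in> T" by (rule T_take)
next
  fix \<eta> l assume "\<eta> \<in> T" "l < length \<eta>" then show "\<eta> ! l \<in> H l" using PT_nth[OF qPT] T_sub by blast
next
  fix \<eta> assume a: "\<eta> \<in> T"
  show "(\<exists>i. succ_of T \<eta> = {i}) \<or> succ_of T \<eta> = H (length \<eta>)"
  proof (cases "length \<eta> < length \<sigma>")
    case True then show ?thesis using T_succ_lt[OF a True] by blast
  next
    case False
    then have l: "length \<sigma> \<le> length \<eta>" by simp
    show ?thesis using T_succ_ge[OF a l] by (auto simp: spl_def)
  qed
next
  fix \<eta> assume a: "\<eta> \<in> T"
  obtain \<eta>1 where e1: "\<eta>1 \<in> T" "take (length \<eta>) \<eta>1 = \<eta>" "length \<sigma> \<le> length \<eta>1"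
  proof (cases "length \<sigma> \<le> length \<eta>")
    case True then show ?thesis using that a by simp
  next
    case False then show ?thesis using that[of \<sigma>] T_sigma T_lt[OF a] by simp
  qed
  obtain j where j: "j \<ge> length \<eta>1" "j \<notin> J" using Jco by blast
  define Lj where "Lj = ll (cs j)"
  have lLj: "length \<eta>1 \<le> Lj" using j(1) cs_ge[of j] ll_ge[of "cs j"] Lj_def by linarith
  obtain \<rho> where r: "\<rho> \<in> T" "length \<rho> = Lj" "take (length \<eta>1) \<rho> = \<eta>1"
    using ext_len[of T, OF T_ex_succ e1(1) lLj] by blast
  have rC: "\<rho> \<in> CN" using T_CN[OF r(1)] r(2) lLj e1(3) by simp
  obtain \<mu> where mu: "\<mu> \<in> CN" "length \<mu> \<le> length \<rho>" "pi \<rho> = B \<mu>"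
    using pi_prop[OF rC] by blast
  have pr: "pre (pi \<rho>) Lj = \<rho>" using pi_prop[OF rC] r(2) by simp
  obtain k0 where k0: "k0 < s Lj" "Lj \<le> k0" "spl H q (pre (B \<mu>) k0)"
    using s_prop[OF mu(1)] mu(2) r(2) by blast
  have claim: "Lj + d \<le> k0 \<longrightarrow> pre (pi \<rho>) (Lj + d) \<in> T \<and> pi (pre (pi \<rho>) (Lj + d)) = pi \<rho>" for d
  proof (induction d)
    case 0 then show ?case using pr r(1) by simp
  next
    case (Suc d)
    show ?case
    proof
      assume le: "Lj + Suc d \<le> k0"
      define \<nu> where "\<nu> = pre (pi \<rho>) (Lj + d)"
      have v: "\<nu> \<in> T" "pi \<nu> = pi \<rho>" using Suc.IH le \<nu>_def by auto
      have lv: "length \<nu> = Lj + d" using \<nu>_def by simp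
      have ls: "length \<sigma> \<le> length \<nu>" using lv lLj e1(3) by simp
      have vC: "\<nu> \<in> CN" using T_CN[OF v(1) ls] .
      have e: "\<nu> @ [pi \<nu> (length \<nu>)] = pre (pi \<rho>) (Lj + Suc d)"
        using v(2) lv \<nu>_def by (simp add: pre_Suc)
      have "\<nu> @ [pi \<nu> (length \<nu>)] \<in> q" using CN_ext[OF vC] by (simp add: CN_def)
      then have "\<nu> @ [pi \<nu> (length \<nu>)] \<in> T" using T_snoc[OF v(1) ls] by simp
      moreover have "pi (\<nu> @ [pi \<nu> (length \<nu>)]) = pi \<rho>" using pi_coh[OF vC] v(2) by simp
      ultimately show "pre (pi \<rho>) (Lj + Suc d) \<in> T \<and> pi (pre (pi \<rho>) (Lj + Suc d)) = pi \<rho>"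
        using e by simp
    qed
  qed
  define \<nu>0 where "\<nu>0 = pre (pi \<rho>) k0"
  have n0: "\<nu>0 \<in> T" using claim[of "k0 - Lj"] k0(2) \<nu>0_def by simp
  have ln0: "length \<nu>0 = k0" using \<nu>0_def by simp
  have ls0: "length \<sigma> \<le> length \<nu>0" using ln0 k0(2) lLj e1(3) by simp
  have sp: "spl H q \<nu>0" using k0(3) mu(3) \<nu>0_def by simp
  have "k0 \<in> SL" unfolding SL_def using j(2) k0(1,2) E_s[of j] Lj_def by (intro CollectI exI[of _ j]) simp
  then have "succ_of T \<nu>0 = succ_of q \<nu>0" using T_succ_ge[OF n0 ls0] sp ln0 by simp
  then have sT: "spl H T \<nu>0" using sp by (simp add: spl_def)
  have "take (length \<rho>) \<nu>0 = \<rho>" using \<nu>0_def r(2) k0(2) pr by (simp add: take_pre)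
  then have "take (length \<eta>) \<nu>0 = \<eta>" using take_trans[OF e1(2) take_trans[OF r(3)]] by blast
  then show "\<exists>\<nu>'\<in>T. take (length \<eta>) \<nu>' = \<eta> \<and> spl H T \<nu>'" using n0 sT by blast
qed

lemma T_color:
  assumes m: "m \<in> u" and e: "\<eta> \<in> T" "length \<eta> = ll m"
  shows "(restr q \<eta> \<in> X m) = c"
proof -
  obtain j where mj: "m \<in> W" "j \<in> J" "cs j \<le> m" "m < cs (Suc j)" using m unfolding u_def by blast
  define P where "P = Pj j"
  have Pp: "P \<le> cs j" "f P \<le> cs j" "length \<sigma> \<le> P" using Pj_prop P_def by auto
  have mll: "m \<le> ll m" using ll_ge .
  have ls: "length \<sigma> \<le> length \<eta>" using Pp(1,3) mj(3) mll e(2) by linarith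
  have g: "\<forall>k. length \<sigma> \<le> k \<longrightarrow> k < length \<eta> \<longrightarrow>
        (k \<in> SL \<and> spl H q (take k \<eta>)) \<or> \<eta> ! k = pi (take k \<eta>) k"
    using T_ge[OF e(1) ls] by blast
  have eC: "\<eta> \<in> CN" using T_CN[OF e(1) ls] .
  have noSL: "k \<notin> SL" if k: "P \<le> k" "k < ll m" for k
  proof
    assume "k \<in> SL"
    then obtain i where i: "i \<notin> J" "ll (cs i) \<le> k" "k < E i" unfolding SL_def by blast
    have "i \<noteq> j" using i(1) mj(2) by blast
    then consider "i < j" | "j < i" by linarith
    then show False
    proof cases
      case 1
      then have "E i \<le> P" using Pj_E P_def by simp
      then show False using i(3) k(1) by simp
    next
      case 2
      then have "Suc j \<le> i" by simp
      then have "cs (Suc j) \<le> cs i" by (rule cs_mono)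
      then have "m < cs i" using mj(4) by linarith
      then have "ll m < ll (cs i)" using ll_less by blast
      then show False using i(2) k(2) by simp
    qed
  qed
  have claim: "P + d \<le> ll m \<longrightarrow> pi (take (P + d) \<eta>) = pi (take P \<eta>)" for d
  proof (induction d)
    case 0 then show ?case by simp
  next
    case (Suc d)
    show ?case
    proof
      assume le: "P + Suc d \<le> ll m"
      define k where "k = P + d"
      have kl: "k < length \<eta>" using le e(2) k_def by simp
      have kP: "P \<le> k" "k < ll m" using k_def le by auto
      have sk: "length \<sigma> \<le> k" using kP(1) Pp(3) by linarith
      have "\<eta> ! k = pi (take k \<eta>) k" using g[rule_format, OF sk kl] noSL[OF kP] by blast
      moreover have "take (Suc k) \<eta> = take k \<eta> @ [\<eta> ! k]" using kl by (rule take_Suc_conv_app_nth)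
      ultimately have t: "take (Suc k) \<eta> = take k \<eta> @ [pi (take k \<eta>) (length (take k \<eta>))]"
        using kl by simp
      have kC: "take k \<eta> \<in> CN" using CN_take[OF eC] kP(1) Pp(3) by simp
      have "pi (take (Suc k) \<eta>) = pi (take k \<eta>)" unfolding t by (rule pi_coh[OF kC])
      then show "pi (take (P + Suc d) \<eta>) = pi (take P \<eta>)" using Suc.IH le k_def by simp
    qed
  qed
  have Pl: "P \<le> ll m" using Pp(1) mj(3) mll by linarith
  have "pi (take (ll m) \<eta>) = pi (take P \<eta>)" using claim[of "ll m - P"] Pl by simp
  then have pe: "pi \<eta> = pi (take P \<eta>)" using e(2) by simp
  have rC: "take P \<eta> \<in> CN" using CN_take[OF eC Pp(3)] .
  obtain \<mu> where mu: "\<mu> \<in> CN" "length \<mu> \<le> length (take P \<eta>)" "pi (take P \<eta>) = B \<mu>"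
    using pi_prop[OF rC] by blast
  have "length \<mu> \<le> P" using mu(2) by simp
  then have "As P \<subseteq> Yc (B \<mu>)" using As_sub[OF mu(1)] by blast
  moreover have "m \<in> As P" using f_prop[OF mj(1)] Pp(2) mj(3) by simp
  ultimately have "m \<in> Yc (pi \<eta>)" using pe mu(3) by auto
  moreover have "pre (pi \<eta>) (ll m) = \<eta>" using pi_prop[OF eC] e(2) by simp
  ultimately show ?thesis unfolding Yc_def by (cases c) auto
qed

lemma X_open: "r \<in> X m \<Longrightarrow> r' \<in> PT H \<Longrightarrow> r' \<subseteq> r \<Longrightarrow> r' \<in> X m"
  using nm unfolding set_name_def by blast
lemma X_dense: "r \<in> PT H \<Longrightarrow> dense_below (PT H) (X m) r \<Longrightarrow> r \<in> X m"
  using nm unfolding set_name_def by blast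

lemma S3_main: "T \<in> PT H \<and> T \<subseteq> q \<and> u \<in> U \<and>
   ((\<forall>n\<in>u. T \<in> X n) \<or> (\<forall>n\<in>u. \<forall>r\<in>PT H. r \<subseteq> T \<longrightarrow> r \<notin> X n))"
proof (intro conjI)
  show "T \<in> PT H" by (rule T_PT)
  show "T \<subseteq> q" by (rule T_sub)
  show "u \<in> U" by (rule u_U)
  show "(\<forall>n\<in>u. T \<in> X n) \<or> (\<forall>n\<in>u. \<forall>r\<in>PT H. r \<subseteq> T \<longrightarrow> r \<notin> X n)"
  proof (cases c)
    case True
    have "T \<in> X n" if n: "n \<in> u" for n
    proof (rule X_dense[OF T_PT])
      show "dense_below (PT H) (X n) T" unfolding dense_below_def
      proof (intro ballI impI)
        fix r assume r: "r \<in> PT H" "r \<subseteq> T"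
        obtain \<eta> where h: "\<eta> \<in> r" "length \<eta> = ll n" using PT_len0[OF r(1) Hne] by blast
        have hT: "\<eta> \<in> T" using h r by blast
        have "restr q \<eta> \<in> X n" using T_color[OF n hT h(2)] True by simp
        moreover have "restr r \<eta> \<in> PT H" using restr_PT[OF r(1) h(1)] .
        moreover have "restr r \<eta> \<subseteq> restr q \<eta>" using restr_mono r(2) T_sub by blast
        ultimately have "restr r \<eta> \<in> X n" using X_open by blast
        then show "\<exists>r'\<in>X n. r' \<subseteq> r" using restr_sub by blast
      qed
    qed
    then show ?thesis by blast
  next
    case False
    have "r \<notin> X n" if n: "n \<in> u" and r: "r \<in> PT H" "r \<subseteq> T" for n r
    proof
      assume rX: "r \<in> X n"
      obtain \<eta> where h: "\<eta> \<in> r" "length \<eta> = ll n" using PT_len0[OF r(1) Hne] by blast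
      have hT: "\<eta> \<in> T" using h r by blast
      have hq: "\<eta> \<in> q" using hT T_sub by blast
      have "restr q \<eta> \<notin> X n" using T_color[OF n hT h(2)] False by simp
      then have all: "\<forall>r'\<in>PT H. r' \<subseteq> restr q \<eta> \<longrightarrow> r' \<notin> X n" using dec[OF hq, of n] h(2) by simp
      have rp: "restr r \<eta> \<in> PT H" using restr_PT[OF r(1) h(1)] .
      have "restr r \<eta> \<in> X n" using X_open[OF rX rp restr_sub] .
      moreover have "restr r \<eta> \<subseteq> restr q \<eta>" using restr_mono r(2) T_sub by blast
      ultimately show False using all rp by blast
    qed
    then show ?thesis by blast
  qed
qed

end

theorem lemma2p22:
  fixes H :: "nat \<Rightarrow> 'a set" and U :: "nat set set"
  assumes "\<And>n. finite (H n)" and "\<And>n. card (H n) \<ge> 2"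
    and "p_point U"
  shows "forces_generates_ultrafilter (PT H) U"
proof -
  have Hfin: "\<And>n. finite (H n)" using assms(1) .
  have Hne: "H n \<noteq> {}" for n
  proof
    assume "H n = {}" then show False using assms(2)[of n] by simp
  qed
  have uf: "ultrafilter_on_nat U" using assms(3) unfolding p_point_def by (rule conjunct1)
  have pp0: "\<forall>As :: nat \<Rightarrow> nat set. (\<forall>n. As n \<in> U) \<longrightarrow> (\<exists>A\<in>U. \<forall>n. finite (A - As n))"
    using assms(3) unfolding p_point_def by (rule conjunct2)
  note pp = pp0[rule_format]
  show ?thesis unfolding forces_generates_ultrafilter_def
  proof (intro allI impI ballI)
    fix X p assume nm: "set_name (PT H) X" and pP: "p \<in> PT H"
    show "\<exists>q\<in>PT H. q \<subseteq> p \<and> (\<exists>u\<in>U. (\<forall>n\<in>u. q \<in> X n) \<or> (\<forall>n\<in>u. \<forall>r\<in>PT H. r \<subseteq> q \<longrightarrow> r \<notin> X n))"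
    proof (cases "\<exists>k. {k} \<in> U")
      case True
      then obtain k where k: "{k} \<in> U" by blast
      show ?thesis
      proof (cases "\<exists>q\<in>PT H. q \<subseteq> p \<and> q \<in> X k")
        case True
        then obtain q where q: "q \<in> PT H" "q \<subseteq> p" "q \<in> X k" by blast
        have "\<exists>u\<in>U. (\<forall>n\<in>u. q \<in> X n)" using k q(3) by (intro bexI[of _ "{k}"]) auto
        then show ?thesis using q by blast
      next
        case False
        then have "\<forall>n\<in>{k}. \<forall>r\<in>PT H. r \<subseteq> p \<longrightarrow> r \<notin> X n" by blast
        then show ?thesis using k pP by blast
      qed
    next
      case False
      interpret F: fus H X p by unfold_locales (use Hfin Hne nm pP in auto)
      obtain q ll where q: "q \<in> PT H" "q \<subseteq> p" "strict_mono ll"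
        and dq: "\<And>m \<eta>. \<eta> \<in> q \<Longrightarrow> ll m \<le> length \<eta> \<Longrightarrow>
          restr q \<eta> \<in> X m \<or> (\<forall>r\<in>PT H. r \<subseteq> restr q \<eta> \<longrightarrow> r \<notin> X m)"
        using F.fusion by blast
      define Z where "Z x = {m. restr q (pre x (ll m)) \<in> X m}" for x
      obtain \<sigma> c where sq: "\<sigma> \<in> q" and cone: "\<And>\<nu>. \<nu> \<in> q \<Longrightarrow> take (length \<sigma>) \<nu> = \<sigma> \<Longrightarrow>
          \<exists>x. branch q x \<and> pre x (length \<nu>) = \<nu> \<and> (if c then Z x else - Z x) \<in> U"
      proof (cases "\<forall>\<nu>\<in>q. \<exists>x. branch q x \<and> pre x (length \<nu>) = \<nu> \<and> Z x \<in> U")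
        case True
        show ?thesis by (rule that[of "[]" True]) (use True PT_nil[OF q(1)] in auto)
      next
        case False
        then obtain \<nu>0 where n0: "\<nu>0 \<in> q" "\<forall>x. branch q x \<and> pre x (length \<nu>0) = \<nu>0 \<longrightarrow> Z x \<notin> U"
          by blast
        show ?thesis
        proof (rule that[of \<nu>0 False])
          show "\<nu>0 \<in> q" by (rule n0(1))
        next
          fix \<nu> assume v: "\<nu> \<in> q" "take (length \<nu>0) \<nu> = \<nu>0"
          obtain x where x: "branch q x" "pre x (length \<nu>) = \<nu>" using branch_ex[OF q(1) Hne v(1)] by blast
          have l: "length \<nu>0 \<le> length \<nu>" using v(2) by (rule take_len_le)
          have "pre x (length \<nu>0) = take (length \<nu>0) (pre x (length \<nu>))" using l by (simp add: take_pre)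
          then have "pre x (length \<nu>0) = \<nu>0" using x(2) v(2) by simp
          then have "Z x \<notin> U" using n0(2) x(1) by blast
          then have "- Z x \<in> U" using uf_compl[OF uf] by blast
          then show "\<exists>x. branch q x \<and> pre x (length \<nu>) = \<nu> \<and> (if False then Z x else - Z x) \<in> U"
            using x by auto
        qed
      qed
      have cone': "\<And>\<nu>. \<nu> \<in> q \<Longrightarrow> take (length \<sigma>) \<nu> = \<sigma> \<Longrightarrow> \<exists>x. branch q x \<and> pre x (length \<nu>) = \<nu> \<and>
        (if c then {m. restr q (pre x (ll m)) \<in> X m} else - {m. restr q (pre x (ll m)) \<in> X m}) \<in> U"
        using cone unfolding Z_def .
      interpret S: S1 H U X q ll c \<sigma>
        by unfold_locales (fact Hfin Hne uf nm q(1) q(3) dq sq cone')+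
      from pp[of S.As, OF S.As_U] obtain W where W: "W \<in> U" "\<forall>n. finite (W - S.As n)" by blast
      interpret S2: S2 H U X q ll c \<sigma> W by unfold_locales (use W in auto)
      have c0: "{m. S2.cs 0 \<le> m} \<in> U"
      proof -
        have "{m. S2.cs 0 \<le> m} \<in> U \<or> - {m. S2.cs 0 \<le> m} \<in> U" using uf_compl[OF uf] .
        moreover have "- {m. S2.cs 0 \<le> m} \<notin> U"
        proof
          assume "- {m. S2.cs 0 \<le> m} \<in> U"
          moreover have "finite (- {m. S2.cs 0 \<le> m})"
          proof -
            have "- {m. S2.cs 0 \<le> m} = {..<S2.cs 0}" by auto
            then show ?thesis by simp
          qed
          ultimately show False using uf_fin_principal[OF uf] False by blast
        qed
        ultimately show ?thesis by blast
      qed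
      define EV where "EV = {m. \<exists>j\<in>{j. even j}. S2.cs j \<le> m \<and> m < S2.cs (Suc j)}"
      define OD where "OD = {m. \<exists>j\<in>{j. odd j}. S2.cs j \<le> m \<and> m < S2.cs (Suc j)}"
      have "{m. S2.cs 0 \<le> m} \<subseteq> EV \<union> OD"
      proof
        fix m assume "m \<in> {m. S2.cs 0 \<le> m}"
        then obtain j where "S2.cs j \<le> m" "m < S2.cs (Suc j)" using S2.cover by auto
        then show "m \<in> EV \<union> OD" unfolding EV_def OD_def by auto
      qed
      then have "EV \<union> OD \<in> U" using uf_up[OF uf c0] by blast
      then have "EV \<in> U \<or> OD \<in> U"
      proof -
        assume u: "EV \<union> OD \<in> U"
        show ?thesis
        proof (rule ccontr)
          assume "\<not> (EV \<in> U \<or> OD \<in> U)"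
          then have "- EV \<in> U" "- OD \<in> U" using uf_compl[OF uf] by blast+
          then have "(EV \<union> OD) \<inter> (- EV \<inter> - OD) \<in> U" using uf_int[OF uf] u by blast
          then show False using uf_empty[OF uf] by (simp add: Int_Un_distrib2 inf_commute)
        qed
      qed
      then obtain J where Jco: "\<And>n. \<exists>j\<ge>n. j \<notin> J"
        and JU: "{m. \<exists>j\<in>J. S2.cs j \<le> m \<and> m < S2.cs (Suc j)} \<in> U"
      proof
        assume "EV \<in> U"
        show ?thesis
        proof (rule that[of "{j. even j}"])
          fix n :: nat show "\<exists>j\<ge>n. j \<notin> {j. even j}" by (intro exI[of _ "Suc (2*n::nat)"]) simp
        next
          show "{m. \<exists>j\<in>{j. even j}. S2.cs j \<le> m \<and> m < S2.cs (Suc j)} \<in> U" using \<open>EV \<in> U\<close> EV_def by simp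
        qed
      next
        assume "OD \<in> U"
        show ?thesis
        proof (rule that[of "{j. odd j}"])
          fix n :: nat show "\<exists>j\<ge>n. j \<notin> {j. odd j}" by (intro exI[of _ "2*n::nat"]) simp
        next
          show "{m. \<exists>j\<in>{j. odd j}. S2.cs j \<le> m \<and> m < S2.cs (Suc j)} \<in> U" using \<open>OD \<in> U\<close> OD_def by simp
        qed
      qed
      interpret S3: S3 H U X q ll c \<sigma> W J by unfold_locales (use Jco JU in auto)
      have m: "S3.T \<in> PT H" "S3.T \<subseteq> q" "S3.u \<in> U"
        "(\<forall>n\<in>S3.u. S3.T \<in> X n) \<or> (\<forall>n\<in>S3.u. \<forall>r\<in>PT H. r \<subseteq> S3.T \<longrightarrow> r \<notin> X n)"
        using S3.S3_main by auto
      show ?thesis using m q(2) by blast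
    qed
  qed
qed

end
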